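(* In the odd setting below, assume $N_k$ is invertible and let $c_k^0,\dots,c_k^{2s}$ be the $n\times n$ blocks of the unique $mn\times n$ matrix $C_k=(c_k^0;\dots;c_k^{2s})$ with $N_kC_k=F^{(k)}_{2s+1}$. Then each $c_k^i$ is homogeneous with respect to the scaling, with $\deg c_k^{2\ell}=\ell/s$ ($\ell=0,\dots,s$) and $\deg c_k^{2\ell+1}=-1+\ell/s$ ($\ell=0,\dots,s-1$); that is, $c_k^i$ has the same degree as $a_k^i$.
   Context: Odd setting: integers $n\ge1$, $s\ge1$, $m=2s+1$; $a_k^0,\dots,a_k^{2s}$ are $n\times n$ matrices with indeterminate entries, $N$-periodic in $k$. $Q_k$ is the $mn\times mn$ block matrix with $I_n$ in blocks $(i+1,i)$, last block column $(a_k^0;\dots;a_k^{2s})$, $O_n$ elsewhere. $r_k=(a_k^0;O_n;a_k^2;O_n;\dots;O_n;a_k^{2s})$. $F^{(k)}_0=r_k$, $F^{(k)}_\ell=Q_k\cdots Q_{k+\ell-1}r_{k+\ell}$, $N_k=(F^{(k)}_0,\dots,F^{(k)}_{2s})$. The scaling, for $\mu>0$: $a^{2r+1}\mapsto\mu^{-1+r/s}a^{2r+1}$ ($r=0,\dots,s-1$), $a^{2r}\mapsto\mu^{r/s}a^{2r}$ ($r=0,\dots,s$), applied for every index $k$; a rational function is homogeneous of degree $d$ if the scaling multiplies it by $\mu^d$, and a matrix is homogeneous of degree $d$ if all its entries are. *)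

theory Defs
  imports "Jordan_Normal_Form.Determinant"
begin

text \<open>Coefficient data: a k i is the n x n matrix a_k^i (i = 0..2s), for k a natural index.
  Indeterminates are modelled by arbitrary real values of the entries.\<close>

definition Qmat :: "nat \<Rightarrow> nat \<Rightarrow> (nat \<Rightarrow> nat \<Rightarrow> real mat) \<Rightarrow> nat \<Rightarrow> real mat" where
  "Qmat n s a k = mat ((2*s+1)*n) ((2*s+1)*n) (\<lambda>(i,j).
     if j div n = 2*s then a k (i div n) $$ (i mod n, j mod n)
     else if i div n = j div n + 1 \<and> i mod n = j mod n then 1 else 0)"

definition rmat :: "nat \<Rightarrow> nat \<Rightarrow> (nat \<Rightarrow> nat \<Rightarrow> real mat) \<Rightarrow> nat \<Rightarrow> real mat" where
  "rmat n s a k = mat ((2*s+1)*n) n (\<lambda>(i,j).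
     if even (i div n) then a k (i div n) $$ (i mod n, j) else 0)"

fun Qprod :: "nat \<Rightarrow> nat \<Rightarrow> (nat \<Rightarrow> nat \<Rightarrow> real mat) \<Rightarrow> nat \<Rightarrow> nat \<Rightarrow> real mat" where
  "Qprod n s a k 0 = 1\<^sub>m ((2*s+1)*n)"
| "Qprod n s a k (Suc l) = Qprod n s a k l * Qmat n s a (k + l)"

definition Fmat :: "nat \<Rightarrow> nat \<Rightarrow> (nat \<Rightarrow> nat \<Rightarrow> real mat) \<Rightarrow> nat \<Rightarrow> nat \<Rightarrow> real mat" where
  "Fmat n s a k l = Qprod n s a k l * rmat n s a (k + l)"

definition Nmat :: "nat \<Rightarrow> nat \<Rightarrow> (nat \<Rightarrow> nat \<Rightarrow> real mat) \<Rightarrow> nat \<Rightarrow> real mat" where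
  "Nmat n s a k = mat ((2*s+1)*n) ((2*s+1)*n) (\<lambda>(i,j). Fmat n s a k (j div n) $$ (i, j mod n))"

definition Cmat :: "nat \<Rightarrow> nat \<Rightarrow> (nat \<Rightarrow> nat \<Rightarrow> real mat) \<Rightarrow> nat \<Rightarrow> real mat" where
  "Cmat n s a k = (THE C. C \<in> carrier_mat ((2*s+1)*n) n \<and> Nmat n s a k * C = Fmat n s a k (2*s+1))"

definition cblock :: "nat \<Rightarrow> nat \<Rightarrow> (nat \<Rightarrow> nat \<Rightarrow> real mat) \<Rightarrow> nat \<Rightarrow> nat \<Rightarrow> real mat" where
  "cblock n s a k i = mat n n (\<lambda>(p,q). Cmat n s a k $$ (i*n + p, q))"

definition sdeg :: "nat \<Rightarrow> nat \<Rightarrow> real" where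
  "sdeg s i = (if even i then real (i div 2) / real s else -1 + real (i div 2) / real s)"

definition scale :: "nat \<Rightarrow> real \<Rightarrow> (nat \<Rightarrow> nat \<Rightarrow> real mat) \<Rightarrow> (nat \<Rightarrow> nat \<Rightarrow> real mat)" where
  "scale s \<mu> a = (\<lambda>k i. (\<mu> powr sdeg s i) \<cdot>\<^sub>m a k i)"

end

theory Submission
  imports Defs
begin


lemma sum_blocks: "(\<Sum>j<m*n. f j) = (\<Sum>b<m. \<Sum>p<n. f (b*n+p))" for f :: "nat \<Rightarrow> real"
proof (induction m)
  case 0 then show ?case by simp
next
  case (Suc m)
  have "{..<Suc m * n} = {..<m*n} \<union> {m*n..<m*n+n}" by auto
  hence "(\<Sum>j<Suc m*n. f j) = (\<Sum>j<m*n. f j) + (\<Sum>j\<in>{m*n..<m*n+n}. f j)"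
    by (simp add: sum.union_disjoint ivl_disj_int)
  also have "(\<Sum>j\<in>{m*n..<m*n+n}. f j) = (\<Sum>p<n. f (m*n+p))"
    by (rule sum.reindex_bij_witness[of _ "\<lambda>p. m*n+p" "\<lambda>j. j - m*n"]) auto
  finally show ?case using Suc by simp
qed



lemma divmod_blk[simp]: "p < (n::nat) \<Longrightarrow> (i*n+p) div n = i" "p < (n::nat) \<Longrightarrow> (i*n+p) mod n = p"
  by auto

lemma blk_lt: "i \<le> 2*s \<Longrightarrow> p < n \<Longrightarrow> i*n+p < (2*s+1)*(n::nat)"
proof -
  assume "i \<le> 2*s" "p < n"
  hence "i*n+p < i*n+n" by simp
  also have "\<dots> = (i+1)*n" by simp
  also have "\<dots> \<le> (2*s+1)*n" using \<open>i \<le> 2*s\<close> by (intro mult_right_mono) auto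
  finally show ?thesis .
qed

lemma Qmat_carrier[simp]: "Qmat n s a t \<in> carrier_mat ((2*s+1)*n) ((2*s+1)*n)"
  by (simp add: Qmat_def)
lemma rmat_carrier[simp]: "rmat n s a t \<in> carrier_mat ((2*s+1)*n) n"
  by (simp add: rmat_def)
lemma Qprod_carrier[simp]: "Qprod n s a t l \<in> carrier_mat ((2*s+1)*n) ((2*s+1)*n)"
proof (induction l)
  case (Suc l) show ?case unfolding Qprod.simps by (rule mult_carrier_mat[OF Suc Qmat_carrier])
qed simp
lemma Fmat_carrier[simp]: "Fmat n s a t l \<in> carrier_mat ((2*s+1)*n) n"
  unfolding Fmat_def by (rule mult_carrier_mat[OF Qprod_carrier rmat_carrier])
lemma Nmat_carrier[simp]: "Nmat n s a t \<in> carrier_mat ((2*s+1)*n) ((2*s+1)*n)"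
  by (simp add: Nmat_def)

lemma mult_entry_sum:
  assumes "A \<in> carrier_mat r m" "B \<in> carrier_mat m c" "i < r" "q < c"
  shows "(A * B) $$ (i,q) = (\<Sum>j<m. A $$ (i,j) * B $$ (j,q))"
  using assms by (auto simp: scalar_prod_def lessThan_atLeast0 intro!: sum.cong)

lemma Q_mult_entry:
  assumes X: "X \<in> carrier_mat ((2*s+1)*n) c" and i: "i \<le> 2*s" and p: "p < n" and q: "q < c"
  shows "(Qmat n s a t * X) $$ (i*n+p, q) = (if i = 0 then 0 else X $$ ((i-1)*n+p, q))
           + (\<Sum>p'<n. a t i $$ (p,p') * X $$ (2*s*n+p', q))"
proof -
  let ?M = "(2*s+1)*n"
  let ?g = "\<lambda>b. \<Sum>p'<n. Qmat n s a t $$ (i*n+p, b*n+p') * X $$ (b*n+p', q)"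
  have ip: "i*n+p < ?M" using blk_lt[OF i p] .
  have "(Qmat n s a t * X) $$ (i*n+p, q) = (\<Sum>j<?M. Qmat n s a t $$ (i*n+p,j) * X $$ (j,q))"
    by (rule mult_entry_sum[OF Qmat_carrier X ip q])
  also have "\<dots> = (\<Sum>b<2*s+1. ?g b)" by (rule sum_blocks)
  also have "\<dots> = (\<Sum>b<2*s. ?g b) + ?g (2*s)" by simp
  also have "?g (2*s) = (\<Sum>p'<n. a t i $$ (p,p') * X $$ (2*s*n+p', q))"
  proof (rule sum.cong[OF refl])
    fix p' assume "p' \<in> {..<n}"
    hence p': "p' < n" by simp
    have "2*s*n+p' < ?M" using blk_lt[OF _ p', of "2*s" s] by simp
    thus "Qmat n s a t $$ (i*n+p, 2*s*n+p') * X $$ (2*s*n+p', q) = a t i $$ (p,p') * X $$ (2*s*n+p', q)"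
      using ip p p' by (simp add: Qmat_def)
  qed
  also have "(\<Sum>b<2*s. ?g b) = (\<Sum>b<2*s. if b + 1 = i then X $$ ((i-1)*n+p, q) else 0)"
  proof (rule sum.cong[OF refl])
    fix b assume "b \<in> {..<2*s}"
    hence b: "b < 2*s" by simp
    have "?g b = (\<Sum>p'<n. if p' = p then (if b + 1 = i then X $$ (b*n+p, q) else 0) else 0)"
    proof (rule sum.cong[OF refl])
      fix p' assume "p' \<in> {..<n}"
      hence p': "p' < n" by simp
      have "b*n+p' < ?M" using blk_lt[OF _ p', of b s] b by simp
      thus "Qmat n s a t $$ (i*n+p, b*n+p') * X $$ (b*n+p', q) = (if p' = p then (if b + 1 = i then X $$ (b*n+p, q) else 0) else 0)"
        using ip p p' b by (auto simp add: Qmat_def)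
    qed
    also have "\<dots> = (if b + 1 = i then X $$ (b*n+p, q) else 0)" using p by simp
    also have "\<dots> = (if b + 1 = i then X $$ ((i-1)*n+p, q) else 0)" by auto
    finally show "?g b = \<dots>" .
  qed
  also have "\<dots> = (if i = 0 then 0 else X $$ ((i-1)*n+p, q))"
  proof (cases "i = 0")
    case True thus ?thesis by simp
  next
    case False
    have "(\<Sum>b<2*s. if b + 1 = i then X $$ ((i-1)*n+p, q) else 0) = (\<Sum>b<2*s. if b = i - 1 then X $$ ((i-1)*n+p, q) else 0)"
      using False by (intro sum.cong) auto
    also have "\<dots> = X $$ ((i-1)*n+p, q)" using False i by simp
    finally show ?thesis using False by simp
  qed
  finally show ?thesis .
qed

lemma r_mult_entry:
  assumes Y: "Y \<in> carrier_mat n c" and i: "i \<le> 2*s" and p: "p < n" and q: "q < c"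
  shows "(rmat n s a t * Y) $$ (i*n+p, q) = (if even i then (\<Sum>p'<n. a t i $$ (p,p') * Y $$ (p', q)) else 0)"
proof -
  have ip: "i*n+p < (2*s+1)*n" using blk_lt[OF i p] .
  have "(rmat n s a t * Y) $$ (i*n+p, q) = (\<Sum>j<n. rmat n s a t $$ (i*n+p,j) * Y $$ (j,q))"
    by (rule mult_entry_sum[OF rmat_carrier Y ip q])
  also have "\<dots> = (\<Sum>j<n. (if even i then a t i $$ (p,j) * Y $$ (j,q) else 0))"
    using ip p by (intro sum.cong) (auto simp: rmat_def)
  finally show ?thesis by auto
qed

lemma Qprod_Suc_left: "Qprod n s a t (Suc l) = Qmat n s a t * Qprod n s a (Suc t) l"
proof (induction l)
  case 0 
  have "Qprod n s a t (Suc 0) = 1\<^sub>m ((2*s+1)*n) * Qmat n s a t" by simp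
  also have "\<dots> = Qmat n s a t" by (rule left_mult_one_mat[OF Qmat_carrier])
  also have "\<dots> = Qmat n s a t * 1\<^sub>m ((2*s+1)*n)" by (rule right_mult_one_mat[OF Qmat_carrier, symmetric])
  finally show ?case by simp
next
  case (Suc l)
  have "Qprod n s a t (Suc (Suc l)) = Qprod n s a t (Suc l) * Qmat n s a (t + Suc l)" by simp
  also have "\<dots> = Qmat n s a t * Qprod n s a (Suc t) l * Qmat n s a (Suc t + l)" using Suc by simp
  also have "\<dots> = Qmat n s a t * (Qprod n s a (Suc t) l * Qmat n s a (Suc t + l))"
    by (rule assoc_mult_mat[OF Qmat_carrier Qprod_carrier Qmat_carrier])
  finally show ?case by simp
qed

lemma Fmat_Suc: "Fmat n s a t (Suc l) = Qmat n s a t * Fmat n s a (Suc t) l"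
proof -
  have "Fmat n s a t (Suc l) = Qmat n s a t * Qprod n s a (Suc t) l * rmat n s a (Suc t + l)"
    unfolding Fmat_def Qprod_Suc_left by simp
  also have "\<dots> = Qmat n s a t * (Qprod n s a (Suc t) l * rmat n s a (Suc t + l))"
    by (rule assoc_mult_mat[OF Qmat_carrier Qprod_carrier rmat_carrier])
  finally show ?thesis by (simp add: Fmat_def)
qed

lemma Fmat_0: "Fmat n s a t 0 = rmat n s a t"
  unfolding Fmat_def Qprod.simps add_0_right by (rule left_mult_one_mat[OF rmat_carrier])

lemma N_mult_entry:
  assumes X: "X \<in> carrier_mat ((2*s+1)*n) c" and i: "i < (2*s+1)*n" and q: "q < c"
  shows "(Nmat n s a t * X) $$ (i, q) = (\<Sum>l<2*s+1. \<Sum>p<n. Fmat n s a t l $$ (i,p) * X $$ (l*n+p, q))"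
proof -
  have "(Nmat n s a t * X) $$ (i, q) = (\<Sum>j<(2*s+1)*n. Nmat n s a t $$ (i,j) * X $$ (j,q))"
    by (rule mult_entry_sum[OF Nmat_carrier X i q])
  also have "\<dots> = (\<Sum>l<2*s+1. \<Sum>p<n. Nmat n s a t $$ (i,l*n+p) * X $$ (l*n+p, q))" by (rule sum_blocks)
  also have "\<dots> = (\<Sum>l<2*s+1. \<Sum>p<n. Fmat n s a t l $$ (i,p) * X $$ (l*n+p, q))"
  proof (intro sum.cong refl)
    fix l p assume "l \<in> {..<2*s+1}" "p \<in> {..<n}"
    hence "l*n+p < (2*s+1)*n" using blk_lt[of l s p n] by auto
    thus "Nmat n s a t $$ (i,l*n+p) * X $$ (l*n+p, q) = Fmat n s a t l $$ (i,p) * X $$ (l*n+p, q)"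
      using i \<open>p \<in> {..<n}\<close> by (simp add: Nmat_def)
  qed
  finally show ?thesis .
qed

lemma mat_ext_blk:
  assumes "X \<in> carrier_mat ((2*s+1)*n) c" "Y \<in> carrier_mat ((2*s+1)*n) c"
    and "\<And>i p q. i \<le> 2*s \<Longrightarrow> p < n \<Longrightarrow> q < c \<Longrightarrow> X $$ (i*n+p,q) = Y $$ (i*n+p,q)"
  shows "X = Y"
proof (rule eq_matI)
  fix r q assume r: "r < dim_row Y" and q: "q < dim_col Y"
  hence r': "r < (2*s+1)*n" and q': "q < c" using assms by auto
  hence n0: "n > 0" by (cases n) auto
  have "r div n < 2*s+1" using r' by (simp add: div_less_iff_less_mult n0)
  hence "r div n \<le> 2*s" by simp
  moreover have "r mod n < n" using n0 by simp
  ultimately have "X $$ ((r div n)*n + r mod n, q) = Y $$ ((r div n)*n + r mod n, q)" using assms(3) q' by blast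
  thus "X $$ (r,q) = Y $$ (r,q)" by simp
qed (insert assms, auto)



fun tailM :: "nat \<Rightarrow> nat \<Rightarrow> (nat \<Rightarrow> nat \<Rightarrow> real mat) \<Rightarrow> nat \<Rightarrow> (nat \<Rightarrow> real mat) \<Rightarrow> nat \<Rightarrow> real mat" where
  "tailM n s a k e 0 = rmat n s a (k + (2*s+1)) * e (2*s+1)"
| "tailM n s a k e (Suc p) = rmat n s a (k + (2*s - p)) * e (2*s - p) + Qmat n s a (k + (2*s - p)) * tailM n s a k e p"

definition TT where "TT n s a k e l = tailM n s a k e (2*s+1-l)"

definition stack :: "nat \<Rightarrow> nat \<Rightarrow> (nat \<Rightarrow> real mat) \<Rightarrow> real mat" where
  "stack n s e = mat ((2*s+1)*n) n (\<lambda>(i,q). e (i div n) $$ (i mod n, q))"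

lemma add_entry: "B \<in> carrier_mat r c \<Longrightarrow> i < r \<Longrightarrow> j < c \<Longrightarrow> (A + B) $$ (i,j) = A $$ (i,j) + B $$ (i,j)"
  by auto

lemma stack_carrier[simp]: "stack n s e \<in> carrier_mat ((2*s+1)*n) n" by (simp add: stack_def)

lemma stack_entry: "i \<le> 2*s \<Longrightarrow> p < n \<Longrightarrow> q < n \<Longrightarrow> stack n s e $$ (i*n+p, q) = e i $$ (p,q)"
  using blk_lt[of i s p n] by (simp add: stack_def)

lemma TT_top: "TT n s a k e (2*s+1) = rmat n s a (k+(2*s+1)) * e (2*s+1)"
  by (simp add: TT_def)

lemma TT_rec: "l < 2*s+1 \<Longrightarrow> TT n s a k e l = rmat n s a (k+l) * e l + Qmat n s a (k+l) * TT n s a k e (Suc l)"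
proof -
  assume l: "l < 2*s+1"
  have 1: "2*s+1-l = Suc (2*s+1 - Suc l)" using l by simp
  have 2: "2*s - (2*s+1 - Suc l) = l" using l by simp
  show ?thesis unfolding TT_def 1 tailM.simps 2 ..
qed

lemma tailM_carrier: "(\<And>j. e j \<in> carrier_mat n n) \<Longrightarrow> tailM n s a k e p \<in> carrier_mat ((2*s+1)*n) n"
proof (induction p)
  case 0 show ?case unfolding tailM.simps by (rule mult_carrier_mat[OF rmat_carrier 0])
next
  case (Suc p)
  show ?case unfolding tailM.simps
    by (rule add_carrier_mat[OF mult_carrier_mat[OF Qmat_carrier Suc.IH[OF Suc.prems]]])
qed

lemma TT_carrier: "(\<And>j. e j \<in> carrier_mat n n) \<Longrightarrow> TT n s a k e l \<in> carrier_mat ((2*s+1)*n) n"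
  unfolding TT_def by (rule tailM_carrier)

lemma TT_block:
  assumes e: "\<And>j. e j \<in> carrier_mat n n" and l: "l < 2*s+1" and i: "i \<le> 2*s" and p: "p < n" and q: "q < n"
  shows "TT n s a k e l $$ (i*n+p, q) =
     (if even i then (\<Sum>p'<n. a (k+l) i $$ (p,p') * e l $$ (p',q)) else 0)
   + ((if i = 0 then 0 else TT n s a k e (Suc l) $$ ((i-1)*n+p, q))
      + (\<Sum>p'<n. a (k+l) i $$ (p,p') * TT n s a k e (Suc l) $$ (2*s*n+p', q)))"
proof -
  have ip: "i*n+p < (2*s+1)*n" by (rule blk_lt[OF i p])
  have c1: "rmat n s a (k+l) * e l \<in> carrier_mat ((2*s+1)*n) n" by (rule mult_carrier_mat[OF rmat_carrier e])
  have c2: "Qmat n s a (k+l) * TT n s a k e (Suc l) \<in> carrier_mat ((2*s+1)*n) n"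
    by (rule mult_carrier_mat[OF Qmat_carrier TT_carrier[OF e]])
  have "TT n s a k e l $$ (i*n+p, q) = (rmat n s a (k+l) * e l) $$ (i*n+p, q) + (Qmat n s a (k+l) * TT n s a k e (Suc l)) $$ (i*n+p, q)"
    unfolding TT_rec[OF l] by (rule add_entry[OF c2 ip q])
  also note r_mult_entry[OF e i p q]
  also note Q_mult_entry[OF TT_carrier[OF e] i p q]
  finally show ?thesis .
qed

lemma TT_block_top:
  assumes e: "\<And>j. e j \<in> carrier_mat n n" and i: "i \<le> 2*s" and p: "p < n" and q: "q < n"
  shows "TT n s a k e (2*s+1) $$ (i*n+p, q) =
     (if even i then (\<Sum>p'<n. a (k+(2*s+1)) i $$ (p,p') * e (2*s+1) $$ (p',q)) else 0)"
  unfolding TT_top by (rule r_mult_entry[OF e i p q])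

lemma TT_sum_aux:
  assumes e: "\<And>j. e j \<in> carrier_mat n n" and d: "d \<le> 2*s+1" and i: "i < (2*s+1)*n" and q: "q < n"
  shows "TT n s a k e (2*s+1-d) $$ (i,q) = (\<Sum>j\<in>{2*s+1-d..2*s+1}. (Fmat n s a (k+(2*s+1-d)) (j-(2*s+1-d)) * e j) $$ (i,q))"
  using d i
proof (induction d arbitrary: i)
  case 0
  show ?case using TT_top by (simp add: Fmat_0)
next
  case (Suc d)
  define l where "l = 2*s+1 - Suc d"
  have l: "l < 2*s+1" and Sl: "Suc l = 2*s+1-d" using Suc.prems by (auto simp: l_def)
  have IH: "TT n s a k e (Suc l) $$ (j',q) = (\<Sum>j\<in>{Suc l..2*s+1}. (Fmat n s a (k+Suc l) (j-Suc l) * e j) $$ (j',q))"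
    if "j' < (2*s+1)*n" for j' using Suc.IH[of j'] Suc.prems that unfolding Sl by simp
  let ?M = "(2*s+1)*n"
  have c1: "rmat n s a (k+l) * e l \<in> carrier_mat ?M n" by (rule mult_carrier_mat[OF rmat_carrier e])
  have c2: "Qmat n s a (k+l) * TT n s a k e (Suc l) \<in> carrier_mat ?M n"
    by (rule mult_carrier_mat[OF Qmat_carrier TT_carrier[OF e]])
  have "TT n s a k e l $$ (i,q) = (rmat n s a (k+l) * e l) $$ (i,q) + (Qmat n s a (k+l) * TT n s a k e (Suc l)) $$ (i,q)"
    unfolding TT_rec[OF l] by (rule add_entry[OF c2 Suc.prems(2) q])
  also have "(Qmat n s a (k+l) * TT n s a k e (Suc l)) $$ (i,q) = (\<Sum>j'<?M. Qmat n s a (k+l) $$ (i,j') * TT n s a k e (Suc l) $$ (j',q))"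
    by (rule mult_entry_sum[OF Qmat_carrier TT_carrier[OF e] Suc.prems(2) q])
  also have "\<dots> = (\<Sum>j'<?M. \<Sum>j\<in>{Suc l..2*s+1}. Qmat n s a (k+l) $$ (i,j') * (Fmat n s a (k+Suc l) (j-Suc l) * e j) $$ (j',q))"
    by (intro sum.cong refl, subst IH, simp, rule sum_distrib_left)
  also have "\<dots> = (\<Sum>j\<in>{Suc l..2*s+1}. \<Sum>j'<?M. Qmat n s a (k+l) $$ (i,j') * (Fmat n s a (k+Suc l) (j-Suc l) * e j) $$ (j',q))"
    by (rule sum.swap)
  also have "\<dots> = (\<Sum>j\<in>{Suc l..2*s+1}. (Fmat n s a (k+l) (j-l) * e j) $$ (i,q))"
  proof (intro sum.cong refl)
    fix j assume j: "j \<in> {Suc l..2*s+1}"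
    have cF: "Fmat n s a (k+Suc l) (j-Suc l) * e j \<in> carrier_mat ?M n" by (rule mult_carrier_mat[OF Fmat_carrier e])
    have "(\<Sum>j'<?M. Qmat n s a (k+l) $$ (i,j') * (Fmat n s a (k+Suc l) (j-Suc l) * e j) $$ (j',q))
        = (Qmat n s a (k+l) * (Fmat n s a (k+Suc l) (j-Suc l) * e j)) $$ (i,q)"
      by (rule mult_entry_sum[OF Qmat_carrier cF Suc.prems(2) q, symmetric])
    also have "Qmat n s a (k+l) * (Fmat n s a (k+Suc l) (j-Suc l) * e j) = Qmat n s a (k+l) * Fmat n s a (k+Suc l) (j-Suc l) * e j"
      by (rule assoc_mult_mat[OF Qmat_carrier Fmat_carrier e, symmetric])
    also have "Qmat n s a (k+l) * Fmat n s a (k+Suc l) (j-Suc l) = Fmat n s a (k+l) (Suc (j - Suc l))"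
      by (simp add: Fmat_Suc)
    also have "Suc (j - Suc l) = j - l" using j by auto
    finally show "(\<Sum>j'<?M. Qmat n s a (k+l) $$ (i,j') * (Fmat n s a (k+Suc l) (j-Suc l) * e j) $$ (j',q)) = (Fmat n s a (k+l) (j-l) * e j) $$ (i,q)" .
  qed
  also have "(rmat n s a (k+l) * e l) $$ (i,q) = (Fmat n s a (k+l) (l-l) * e l) $$ (i,q)"
    by (simp add: Fmat_0)
  also have "(Fmat n s a (k+l) (l-l) * e l) $$ (i,q) + (\<Sum>j\<in>{Suc l..2*s+1}. (Fmat n s a (k+l) (j-l) * e j) $$ (i,q))
      = (\<Sum>j\<in>{l..2*s+1}. (Fmat n s a (k+l) (j-l) * e j) $$ (i,q))"
    using l by (simp add: sum.atLeast_Suc_atMost)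
  finally show ?case unfolding l_def .
qed

lemma TT_sum:
  assumes e: "\<And>j. e j \<in> carrier_mat n n" and l: "l \<le> 2*s+1" and i: "i < (2*s+1)*n" and q: "q < n"
  shows "TT n s a k e l $$ (i,q) = (\<Sum>j\<in>{l..2*s+1}. (Fmat n s a (k+l) (j-l) * e j) $$ (i,q))"
  using TT_sum_aux[OF e _ i q, of "2*s+1-l"] l by simp

lemma TT_zero:
  assumes e: "\<And>j. e j \<in> carrier_mat n n" and i: "i < (2*s+1)*n" and q: "q < n"
  shows "TT n s a k e 0 $$ (i,q) = (Nmat n s a k * stack n s e) $$ (i,q) + (Fmat n s a k (2*s+1) * e (2*s+1)) $$ (i,q)"
proof -
  have "TT n s a k e 0 $$ (i,q) = (\<Sum>j\<in>{0..2*s+1}. (Fmat n s a k j * e j) $$ (i,q))"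
    using TT_sum[OF e _ i q, of 0] by simp
  also have "\<dots> = (\<Sum>j<2*s+1. (Fmat n s a k j * e j) $$ (i,q)) + (Fmat n s a k (2*s+1) * e (2*s+1)) $$ (i,q)"
    by (simp add: atLeast0AtMost sum.atMost_Suc lessThan_Suc_atMost[symmetric])
  also have "(\<Sum>j<2*s+1. (Fmat n s a k j * e j) $$ (i,q)) = (\<Sum>j<2*s+1. \<Sum>p<n. Fmat n s a k j $$ (i,p) * stack n s e $$ (j*n+p, q))"
  proof (intro sum.cong refl)
    fix j assume "j \<in> {..<2*s+1}"
    hence j: "j \<le> 2*s" by simp
    show "(Fmat n s a k j * e j) $$ (i,q) = (\<Sum>p<n. Fmat n s a k j $$ (i,p) * stack n s e $$ (j*n+p, q))"
      unfolding mult_entry_sum[OF Fmat_carrier e i q] using stack_entry[OF j _ q] by simp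
  qed
  also have "\<dots> = (Nmat n s a k * stack n s e) $$ (i,q)"
    by (rule N_mult_entry[OF stack_carrier i q, symmetric])
  finally show ?thesis .
qed



lemma TT_zero_input:
  assumes e: "\<And>j. e j \<in> carrier_mat n n" and z: "\<And>j p q. p < n \<Longrightarrow> q < n \<Longrightarrow> e j $$ (p,q) = 0"
    and d: "d \<le> 2*s+1" and i: "i \<le> 2*s" and p: "p < n" and q: "q < n"
  shows "TT n s a k e (2*s+1-d) $$ (i*n+p,q) = 0"
  using d i p q
proof (induction d arbitrary: i p q)
  case 0 thus ?case using TT_block_top[OF e 0(2-4)] z by (simp cong: sum.cong_simp)
next
  case (Suc d)
  have l: "2*s+1 - Suc d < 2*s+1" and Sl: "Suc (2*s+1 - Suc d) = 2*s+1-d" using Suc.prems by auto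
  have IH: "TT n s a k e (Suc (2*s+1 - Suc d)) $$ (i'*n+p',q') = 0" if "i' \<le> 2*s" "p' < n" "q' < n" for i' p' q'
    unfolding Sl using Suc.IH[of i' p' q'] Suc.prems that by simp
  have "(\<Sum>p'<n. a (k+(2*s+1 - Suc d)) i $$ (p,p') * e (2*s+1 - Suc d) $$ (p',q)) = 0"
    using z Suc.prems by (simp cong: sum.cong_simp)
  moreover have "(\<Sum>p'<n. a (k+(2*s+1 - Suc d)) i $$ (p,p') * TT n s a k e (Suc (2*s+1 - Suc d)) $$ (2*s*n+p',q)) = 0"
    using IH Suc.prems by (simp cong: sum.cong_simp)
  moreover have "i \<noteq> 0 \<Longrightarrow> TT n s a k e (Suc (2*s+1 - Suc d)) $$ ((i-1)*n+p,q) = 0"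
    using IH Suc.prems by simp
  ultimately show ?case unfolding TT_block[OF e l Suc.prems(2-4)] by (cases "i = 0") auto
qed

lemma kernel_zero:
  assumes A: "A \<in> carrier_mat m m" and dA: "det A \<noteq> (0::real)" and X: "X \<in> carrier_mat m c"
    and z: "\<And>r q. r < m \<Longrightarrow> q < c \<Longrightarrow> (A * X) $$ (r,q) = 0" and r: "r < m" and q: "q < c"
  shows "X $$ (r,q) = 0"
proof -
  have cv: "col X q \<in> carrier_vec m" by (rule carrier_vecI) (simp add: carrier_matD[OF X])
  have AX: "A * X \<in> carrier_mat m c" using A X by (rule mult_carrier_mat)
  have dr: "dim_row (A*X) = m" "dim_col (A*X) = c" using carrier_matD[OF AX] by auto
  have dAr: "dim_row A = m" using carrier_matD[OF A] by auto
  have dX: "dim_row X = m" "dim_col X = c" using carrier_matD[OF X] by auto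
  have e1: "A *\<^sub>v col X q = col (A * X) q" by (rule col_mult2[OF A X q, symmetric])
  have e2: "col (A * X) q = 0\<^sub>v m"
  proof (rule eq_vecI)
    fix r' assume "r' < dim_vec (0\<^sub>v m :: real vec)"
    hence r': "r' < m" by simp
    have "col (A * X) q $ r' = (A*X) $$ (r',q)" by (rule index_col) (simp_all add: dAr dX r' q)
    thus "col (A * X) q $ r' = 0\<^sub>v m $ r'" using z[OF r' q] r' by simp
  qed (simp add: dAr)
  have nex: "\<not> (\<exists>v. v \<in> carrier_vec m \<and> v \<noteq> 0\<^sub>v m \<and> A *\<^sub>v v = 0\<^sub>v m)"
    using det_0_iff_vec_prod_zero[OF A] dA by simp
  have "col X q = 0\<^sub>v m"
  proof (rule ccontr)
    assume "col X q \<noteq> 0\<^sub>v m"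
    thus False using nex cv e1 e2 by auto
  qed
  hence "col X q $ r = 0" using r by simp
  thus ?thesis using r q by (simp add: dX)
qed

definition LB :: "nat \<Rightarrow> nat \<Rightarrow> real mat \<Rightarrow> real mat" where
  "LB n s X = mat n n (\<lambda>(p,q). X $$ (2*s*n+p, q))"

lemma pattern:
  assumes e: "\<And>j. e j \<in> carrier_mat n n" and det: "det (Nmat n s a k) \<noteq> 0"
    and G0: "\<And>r q. r < (2*s+1)*n \<Longrightarrow> q < n \<Longrightarrow> TT n s a k e 0 $$ (r,q) = 0"
    and l: "l \<le> 2*s+1" and i: "i \<le> 2*s" and par: "even i = even l" and p: "p < n" and q: "q < n"
  shows "TT n s a k e l $$ (i*n+p,q) = 0"
proof -
  let ?M = "(2*s+1)*n"
  let ?G = "TT n s a k e"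
  define \<epsilon> where "\<epsilon> l = (if l < 2*s+1 then (if even l then e l + LB n s (?G (Suc l)) else - LB n s (?G (Suc l))) else 0\<^sub>m n n)" for l
  have \<epsilon>c: "\<epsilon> j \<in> carrier_mat n n" for j using e by (auto simp: \<epsilon>_def LB_def)
  have \<epsilon>top: "\<epsilon> (2*s+1) = 0\<^sub>m n n" by (simp add: \<epsilon>_def)
  have \<epsilon>ev: "\<epsilon> l $$ (p',q') = e l $$ (p',q') + ?G (Suc l) $$ (2*s*n+p',q')"
    if "p' < n" "q' < n" "l < 2*s+1" "even l" for l p' q' using that e by (simp add: \<epsilon>_def LB_def)
  have \<epsilon>od: "\<epsilon> l $$ (p',q') = - ?G (Suc l) $$ (2*s*n+p',q')"
    if "p' < n" "q' < n" "l < 2*s+1" "odd l" for l p' q' using that e by (simp add: \<epsilon>_def LB_def)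
  let ?H = "TT n s a k \<epsilon>"
  have claim1: "?H (2*s+1-d) $$ (i*n+p,q) = (if even i = even (2*s+1-d) then ?G (2*s+1-d) $$ (i*n+p,q) else 0)"
    if "d \<le> 2*s+1" "i \<le> 2*s" "p < n" "q < n" for d i p q
    using that
  proof (induction d arbitrary: i p q)
    case 0
    have h1: "?H (2*s+1) $$ (i*n+p,q) = 0" unfolding TT_block_top[OF \<epsilon>c 0(2-4)] \<epsilon>top using 0 by (simp cong: sum.cong_simp)
    have h2: "odd i \<Longrightarrow> ?G (2*s+1) $$ (i*n+p,q) = 0" unfolding TT_block_top[OF e 0(2-4)] by simp
    show ?case using h1 h2 by simp
  next
    case (Suc d)
    define l where "l = 2*s+1 - Suc d"
    have l: "l < 2*s+1" and Sl: "Suc l = 2*s+1-d" using Suc.prems by (auto simp: l_def)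
    have IH: "?H (Suc l) $$ (i'*n+p',q') = (if even i' = even (Suc l) then ?G (Suc l) $$ (i'*n+p',q') else 0)"
      if "i' \<le> 2*s" "p' < n" "q' < n" for i' p' q'
      unfolding Sl using Suc.IH[of i' p' q'] Suc.prems(1) that by simp
    have IHlast: "?H (Suc l) $$ (2*s*n+p',q) = (if odd l then ?G (Suc l) $$ (2*s*n+p',q) else 0)"
      if "p' < n" for p' using IH[of "2*s" p' q] that Suc.prems(4) by simp
    have IHprev: "?H (Suc l) $$ ((i-1)*n+p,q) = (if even i = even l then ?G (Suc l) $$ ((i-1)*n+p,q) else 0)"
      if "i > 0" using IH[of "i-1" p q] that Suc.prems(2-4) by (cases "even i") auto
    let ?S1 = "\<Sum>p'<n. a (k+l) i $$ (p,p') * e l $$ (p',q)"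
    let ?S2 = "\<Sum>p'<n. a (k+l) i $$ (p,p') * ?G (Suc l) $$ (2*s*n+p',q)"
    have Se1: "(\<Sum>p'<n. a (k+l) i $$ (p,p') * \<epsilon> l $$ (p',q)) = ?S1 + ?S2" if "even l"
    proof -
      have "(\<Sum>p'<n. a (k+l) i $$ (p,p') * \<epsilon> l $$ (p',q)) = (\<Sum>p'<n. a (k+l) i $$ (p,p') * e l $$ (p',q) + a (k+l) i $$ (p,p') * ?G (Suc l) $$ (2*s*n+p',q))"
        using \<epsilon>ev[OF _ Suc.prems(4) l that] by (intro sum.cong refl) (simp add: distrib_left)
      thus ?thesis by (simp add: sum.distrib)
    qed
    have Se2: "(\<Sum>p'<n. a (k+l) i $$ (p,p') * \<epsilon> l $$ (p',q)) = - ?S2" if "odd l"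
    proof -
      have "(\<Sum>p'<n. a (k+l) i $$ (p,p') * \<epsilon> l $$ (p',q)) = (\<Sum>p'<n. - (a (k+l) i $$ (p,p') * ?G (Suc l) $$ (2*s*n+p',q)))"
        using \<epsilon>od[OF _ Suc.prems(4) l that] by (intro sum.cong refl) simp
      thus ?thesis by (simp add: sum_negf)
    qed
    have SH: "(\<Sum>p'<n. a (k+l) i $$ (p,p') * ?H (Suc l) $$ (2*s*n+p',q)) = (if odd l then ?S2 else 0)"
      using IHlast by (cases "odd l") (simp_all cong: sum.cong_simp)
    have HL: "?H l $$ (i*n+p,q) = (if even i then (\<Sum>p'<n. a (k+l) i $$ (p,p') * \<epsilon> l $$ (p',q)) else 0)
       + ((if i = 0 then 0 else ?H (Suc l) $$ ((i-1)*n+p,q)) + (if odd l then ?S2 else 0))"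
      unfolding TT_block[OF \<epsilon>c l Suc.prems(2-4)] SH ..
    have GL: "?G l $$ (i*n+p,q) = (if even i then ?S1 else 0)
       + ((if i = 0 then 0 else ?G (Suc l) $$ ((i-1)*n+p,q)) + ?S2)"
      unfolding TT_block[OF e l Suc.prems(2-4)] ..
    show ?case unfolding l_def[symmetric] HL GL using IHprev Se1 Se2
      by (cases "even l"; cases "even i"; cases "i=0"; simp)
  qed
  have H0: "?H 0 $$ (r,q') = 0" if "r < ?M" "q' < n" for r q'
  proof -
    have n0: "n > 0" using that by (cases n) auto
    have "r div n < 2*s+1" using that by (simp add: div_less_iff_less_mult n0)
    hence rd: "r div n \<le> 2*s" by simp
    have rm: "r mod n < n" using n0 by simp
    have r_eq: "(r div n)*n + r mod n = r" by simp
    have "?H (2*s+1-(2*s+1)) $$ ((r div n)*n+r mod n,q') = (if even (r div n) = even (2*s+1-(2*s+1)) then ?G (2*s+1-(2*s+1)) $$ ((r div n)*n+r mod n,q') else 0)"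
      by (rule claim1[OF _ rd rm that(2)]) simp
    also have "\<dots> = 0" using G0[OF _ that(2), of "(r div n)*n + r mod n"] that(1) unfolding r_eq by simp
    finally show ?thesis unfolding r_eq by simp
  qed
  have Fz: "Fmat n s a k (2*s+1) * \<epsilon> (2*s+1) = 0\<^sub>m ?M n"
    unfolding \<epsilon>top by (rule right_mult_zero_mat[OF Fmat_carrier])
  have NS: "(Nmat n s a k * stack n s \<epsilon>) $$ (r,q') = 0" if "r < ?M" "q' < n" for r q'
  proof -
    have fz0: "(Fmat n s a k (2*s+1) * \<epsilon> (2*s+1)) $$ (r,q') = 0" unfolding Fz using that by simp
    have t: "?H 0 $$ (r,q') = (Nmat n s a k * stack n s \<epsilon>) $$ (r,q') + (Fmat n s a k (2*s+1) * \<epsilon> (2*s+1)) $$ (r,q')"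
      by (rule TT_zero[OF \<epsilon>c that])
    show ?thesis using t H0[OF that] fz0 by simp
  qed
  have \<epsilon>0: "\<epsilon> j $$ (p',q') = 0" if "p' < n" "q' < n" for j p' q'
  proof (cases "j \<le> 2*s")
    case True
    have "stack n s \<epsilon> $$ (j*n+p',q') = 0"
      by (rule kernel_zero[OF Nmat_carrier det stack_carrier NS blk_lt[OF True that(1)] that(2)])
    thus ?thesis using stack_entry[OF True that] by simp
  next
    case False
    hence "j \<ge> 2*s+1" by simp
    then consider "j = 2*s+1" | "j > 2*s+1" by linarith
    thus ?thesis using that by cases (auto simp: \<epsilon>_def)
  qed
  have "?H (2*s+1-(2*s+1-l)) $$ (i*n+p,q) = 0"
    by (rule TT_zero_input[OF \<epsilon>c], rule \<epsilon>0, assumption, assumption, rule diff_le_self, rule i, rule p, rule q)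
  moreover have "?H (2*s+1-(2*s+1-l)) $$ (i*n+p,q) = (if even i = even (2*s+1-(2*s+1-l)) then ?G (2*s+1-(2*s+1-l)) $$ (i*n+p,q) else 0)"
    by (rule claim1[OF _ i p q]) (rule diff_le_self)
  moreover have "2*s+1-(2*s+1-l) = l" using l by simp
  ultimately show ?thesis using par by simp
qed



lemma sd_even_step: "s \<ge> 1 \<Longrightarrow> even l \<Longrightarrow> sdeg s (Suc l) = sdeg s l - 1"
  by (auto simp: sdeg_def elim!: evenE)
lemma sd_odd_step: "s \<ge> 1 \<Longrightarrow> odd l \<Longrightarrow> sdeg s (Suc l) = sdeg s l + 1 + 1 / real s"
proof -
  assume s: "s \<ge> 1" and l: "odd l"
  then obtain r where r: "l = 2*r+1" by (auto elim!: oddE)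
  have "sdeg s (Suc l) = real (Suc r) / real s" using r by (simp add: sdeg_def)
  also have "\<dots> = -1 + real r / real s + 1 + 1 / real s" using s by (simp add: field_simps)
  also have "-1 + real r / real s = sdeg s l" using r by (simp add: sdeg_def)
  finally show ?thesis .
qed
lemma sd_2s: "s \<ge> 1 \<Longrightarrow> sdeg s (2*s) = 1" by (simp add: sdeg_def)

lemma smult_entry: "A \<in> carrier_mat n m \<Longrightarrow> p < n \<Longrightarrow> q < m \<Longrightarrow> (c \<cdot>\<^sub>m A) $$ (p,q) = c * A $$ (p,q)"
  unfolding carrier_mat_def by simp

lemma transport:
  assumes e: "\<And>j. e j \<in> carrier_mat n n"
    and acar: "\<And>t i. i \<le> 2*s \<Longrightarrow> a t i \<in> carrier_mat n n"
    and pat: "\<And>l i p q. l \<le> 2*s+1 \<Longrightarrow> i \<le> 2*s \<Longrightarrow> even i = even l \<Longrightarrow> p < n \<Longrightarrow> q < n \<Longrightarrow> TT n s a k e l $$ (i*n+p,q) = 0"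
    and s: "s \<ge> 1"
    and e'def: "e' = (\<lambda>j. (\<mu> powr sdeg s j) \<cdot>\<^sub>m e j)"
    and d: "d \<le> 2*s+1" and i: "i \<le> 2*s" and p: "p < n" and q: "q < n"
  shows "TT n s (scale s \<mu> a) k e' (2*s+1-d) $$ (i*n+p,q) = \<mu> powr (sdeg s i + sdeg s (2*s+1-d)) * TT n s a k e (2*s+1-d) $$ (i*n+p,q)"
  using d i p q
proof (induction d arbitrary: i p q)
  let ?a' = "scale s \<mu> a"
  have e'c: "e' j \<in> carrier_mat n n" for j unfolding e'def by (rule smult_carrier_mat[OF e])
  have aE: "?a' t i' $$ (p',p'') = \<mu> powr sdeg s i' * a t i' $$ (p',p'')" if "i' \<le> 2*s" "p' < n" "p'' < n" for t i' p' p''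
    unfolding scale_def by (rule smult_entry[OF acar[OF that(1)] that(2,3)])
  have e'e: "e' j $$ (p',q') = \<mu> powr sdeg s j * e j $$ (p',q')" if "p' < n" "q' < n" for j p' q'
    unfolding e'def by (rule smult_entry[OF e that])
  case 0
  let ?m = "2*s+1"
  have "(\<Sum>p'<n. ?a' (k+?m) i $$ (p,p') * e' ?m $$ (p',q)) = (\<Sum>p'<n. (\<mu> powr sdeg s i * \<mu> powr sdeg s ?m) * (a (k+?m) i $$ (p,p') * e ?m $$ (p',q)))"
    by (intro sum.cong refl) (simp add: aE 0(2,3) e'e 0(4))
  also have "\<dots> = \<mu> powr (sdeg s i + sdeg s ?m) * (\<Sum>p'<n. a (k+?m) i $$ (p,p') * e ?m $$ (p',q))"
    by (simp add: sum_distrib_left powr_add)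
  finally have S: "(\<Sum>p'<n. ?a' (k+?m) i $$ (p,p') * e' ?m $$ (p',q)) = \<mu> powr (sdeg s i + sdeg s ?m) * (\<Sum>p'<n. a (k+?m) i $$ (p,p') * e ?m $$ (p',q))" .
  show ?case unfolding diff_zero TT_block_top[OF e'c 0(2-4)] TT_block_top[OF e 0(2-4)] using S by simp
next
  let ?a' = "scale s \<mu> a"
  have e'c: "e' j \<in> carrier_mat n n" for j unfolding e'def by (rule smult_carrier_mat[OF e])
  have aE: "?a' t i' $$ (p',p'') = \<mu> powr sdeg s i' * a t i' $$ (p',p'')" if "i' \<le> 2*s" "p' < n" "p'' < n" for t i' p' p''
    unfolding scale_def by (rule smult_entry[OF acar[OF that(1)] that(2,3)])
  have e'e: "e' j $$ (p',q') = \<mu> powr sdeg s j * e j $$ (p',q')" if "p' < n" "q' < n" for j p' q'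
    unfolding e'def by (rule smult_entry[OF e that])
  case (Suc d)
  define l where "l = 2*s+1 - Suc d"
  have l: "l < 2*s+1" and Sl: "Suc l = 2*s+1-d" using Suc.prems by (auto simp: l_def)
  have IH: "TT n s ?a' k e' (Suc l) $$ (i'*n+p',q') = \<mu> powr (sdeg s i' + sdeg s (Suc l)) * TT n s a k e (Suc l) $$ (i'*n+p',q')"
    if "i' \<le> 2*s" "p' < n" "q' < n" for i' p' q'
    unfolding Sl using Suc.IH[of i' p' q'] Suc.prems(1) that by simp
  let ?G = "TT n s a k e"
  let ?S1 = "\<Sum>p'<n. a (k+l) i $$ (p,p') * e l $$ (p',q)"
  let ?S2 = "\<Sum>p'<n. a (k+l) i $$ (p,p') * ?G (Suc l) $$ (2*s*n+p',q)"
  let ?c = "\<mu> powr (sdeg s i + sdeg s l)"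
  have S1: "(\<Sum>p'<n. ?a' (k+l) i $$ (p,p') * e' l $$ (p',q)) = ?c * ?S1"
  proof -
    have "(\<Sum>p'<n. ?a' (k+l) i $$ (p,p') * e' l $$ (p',q)) = (\<Sum>p'<n. (\<mu> powr sdeg s i * \<mu> powr sdeg s l) * (a (k+l) i $$ (p,p') * e l $$ (p',q)))"
      by (intro sum.cong refl) (simp add: aE Suc.prems(2,3) e'e Suc.prems(4))
    thus ?thesis by (simp add: sum_distrib_left powr_add)
  qed
  have S2: "(\<Sum>p'<n. ?a' (k+l) i $$ (p,p') * TT n s ?a' k e' (Suc l) $$ (2*s*n+p',q)) = ?c * ?S2"
  proof (cases "odd l")
    case True
    have z: "?G (Suc l) $$ (2*s*n+p',q) = 0" if "p' < n" for p'
      using pat[of "Suc l" "2*s" p' q] l True that Suc.prems(4) by simp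
    have "(\<Sum>p'<n. ?a' (k+l) i $$ (p,p') * TT n s ?a' k e' (Suc l) $$ (2*s*n+p',q)) = 0"
      using IH[of "2*s" _ q] z Suc.prems(4) by (simp cong: sum.cong_simp)
    moreover have "?S2 = 0" using z by (simp cong: sum.cong_simp)
    ultimately show ?thesis by simp
  next
    case False
    have ex: "sdeg s i + sdeg s (2*s) + sdeg s (Suc l) = sdeg s i + sdeg s l"
      using sd_2s[OF s] sd_even_step[OF s] False by simp
    have "(\<Sum>p'<n. ?a' (k+l) i $$ (p,p') * TT n s ?a' k e' (Suc l) $$ (2*s*n+p',q))
        = (\<Sum>p'<n. (\<mu> powr sdeg s i * \<mu> powr (sdeg s (2*s) + sdeg s (Suc l))) * (a (k+l) i $$ (p,p') * ?G (Suc l) $$ (2*s*n+p',q)))"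
      by (intro sum.cong refl) (simp add: aE Suc.prems(2,3) IH Suc.prems(4))
    also have "\<dots> = \<mu> powr (sdeg s i + sdeg s (2*s) + sdeg s (Suc l)) * ?S2"
      by (simp add: sum_distrib_left powr_add mult.assoc)
    finally show ?thesis unfolding ex .
  qed
  have X: "TT n s ?a' k e' (Suc l) $$ ((i-1)*n+p,q) = ?c * ?G (Suc l) $$ ((i-1)*n+p,q)" if "i > 0"
  proof (cases "even i = even l")
    case True
    have "?G (Suc l) $$ ((i-1)*n+p,q) = 0"
      using pat[of "Suc l" "i-1" p q] l True that Suc.prems(2-4) by auto
    thus ?thesis using IH[of "i-1" p q] that Suc.prems(2-4) by simp
  next
    case False
    have ex: "sdeg s (i-1) + sdeg s (Suc l) = sdeg s i + sdeg s l"
    proof (cases "even l")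
      case True
      hence oi: "odd i" using False by simp
      have "sdeg s i = sdeg s (i-1) - 1" using sd_even_step[OF s, of "i-1"] oi that by simp
      thus ?thesis using sd_even_step[OF s True] by simp
    next
      case ol: False
      hence ei: "even i" using False by simp
      have "sdeg s i = sdeg s (i-1) + 1 + 1 / real s" using sd_odd_step[OF s, of "i-1"] ei that by simp
      thus ?thesis using sd_odd_step[OF s] ol by simp
    qed
    show ?thesis using IH[of "i-1" p q] that Suc.prems(2-4) unfolding ex by simp
  qed
  have HL: "TT n s ?a' k e' l $$ (i*n+p,q) = (if even i then ?c * ?S1 else 0)
      + ((if i = 0 then 0 else ?c * ?G (Suc l) $$ ((i-1)*n+p,q)) + ?c * ?S2)"
    unfolding TT_block[OF e'c l Suc.prems(2-4)] S1 S2 using X by simp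
  have GL: "?G l $$ (i*n+p,q) = (if even i then ?S1 else 0)
       + ((if i = 0 then 0 else ?G (Suc l) $$ ((i-1)*n+p,q)) + ?S2)"
    unfolding TT_block[OF e l Suc.prems(2-4)] ..
  show ?case unfolding l_def[symmetric] HL GL by (simp add: ring_distribs)
qed




definition Dl :: "nat \<Rightarrow> nat \<Rightarrow> real \<Rightarrow> real mat" where
  "Dl n s \<mu> = mat ((2*s+1)*n) ((2*s+1)*n) (\<lambda>(i,j). if i = j then \<mu> powr (real (i div n) / real (2*s)) else 0)"
definition Lsel :: "nat \<Rightarrow> nat \<Rightarrow> real mat" where
  "Lsel n s = mat n ((2*s+1)*n) (\<lambda>(p,j). if j = 2*s*n+p then 1 else 0)"

lemma Dl_carrier[simp]: "Dl n s \<mu> \<in> carrier_mat ((2*s+1)*n) ((2*s+1)*n)" by (simp add: Dl_def)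
lemma Lsel_carrier[simp]: "Lsel n s \<in> carrier_mat n ((2*s+1)*n)" by (simp add: Lsel_def)

lemma diag_left:
  assumes X: "X \<in> carrier_mat ((2*s+1)*n) c" and i: "i < (2*s+1)*n" and q: "q < c"
  shows "(Dl n s \<mu> * X) $$ (i,q) = \<mu> powr (real (i div n) / real (2*s)) * X $$ (i,q)"
proof -
  have "(Dl n s \<mu> * X) $$ (i,q) = (\<Sum>j<(2*s+1)*n. Dl n s \<mu> $$ (i,j) * X $$ (j,q))"
    by (rule mult_entry_sum[OF Dl_carrier X i q])
  also have "\<dots> = (\<Sum>j<(2*s+1)*n. if i = j then \<mu> powr (real (i div n) / real (2*s)) * X $$ (i,q) else 0)"
    using i by (intro sum.cong refl) (simp add: Dl_def)
  also have "\<dots> = \<mu> powr (real (i div n) / real (2*s)) * X $$ (i,q)" using i by simp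
  finally show ?thesis .
qed

lemma diag_right:
  assumes X: "X \<in> carrier_mat r ((2*s+1)*n)" and i: "i < r" and j: "j < (2*s+1)*n"
  shows "(X * Dl n s \<mu>) $$ (i,j) = X $$ (i,j) * \<mu> powr (real (j div n) / real (2*s))"
proof -
  have "(X * Dl n s \<mu>) $$ (i,j) = (\<Sum>j'<(2*s+1)*n. X $$ (i,j') * Dl n s \<mu> $$ (j',j))"
    by (rule mult_entry_sum[OF X Dl_carrier i j])
  also have "\<dots> = (\<Sum>j'<(2*s+1)*n. if j' = j then X $$ (i,j) * \<mu> powr (real (j div n) / real (2*s)) else 0)"
    using j by (intro sum.cong refl) (auto simp add: Dl_def)
  also have "\<dots> = X $$ (i,j) * \<mu> powr (real (j div n) / real (2*s))" using j by simp
  finally show ?thesis .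
qed

lemma blk_eq_iff: "b < n \<Longrightarrow> d < (n::nat) \<Longrightarrow> (a*n+b = c*n+d) \<longleftrightarrow> (a = c \<and> b = d)"
proof
  assume b: "b < n" and d: "d < n" and e: "a*n+b = c*n+d"
  have "(a*n+b) div n = (c*n+d) div n" "(a*n+b) mod n = (c*n+d) mod n" using e by auto
  thus "a = c \<and> b = d" using b d by simp
qed auto

lemma Lsel_right:
  assumes X: "X \<in> carrier_mat r n" and i: "i < r" and jb: "jb \<le> 2*s" and jp: "jp < n"
  shows "(X * Lsel n s) $$ (i, jb*n+jp) = (if jb = 2*s then X $$ (i,jp) else 0)"
proof -
  have j: "jb*n+jp < (2*s+1)*n" by (rule blk_lt[OF jb jp])
  have "(X * Lsel n s) $$ (i, jb*n+jp) = (\<Sum>p'<n. X $$ (i,p') * Lsel n s $$ (p', jb*n+jp))"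
    by (rule mult_entry_sum[OF X Lsel_carrier i j])
  also have "\<dots> = (\<Sum>p'<n. if jb = 2*s \<and> p' = jp then X $$ (i,jp) else 0)"
  proof (intro sum.cong refl)
    fix p' assume "p' \<in> {..<n}"
    hence p': "p' < n" by simp
    have "(jb*n+jp = 2*s*n+p') = (jb = 2*s \<and> jp = p')" by (rule blk_eq_iff[OF jp p'])
    thus "X $$ (i,p') * Lsel n s $$ (p', jb*n+jp) = (if jb = 2*s \<and> p' = jp then X $$ (i,jp) else 0)"
      using p' j by (auto simp: Lsel_def)
  qed
  also have "\<dots> = (if jb = 2*s then X $$ (i,jp) else 0)" using jp by (cases "jb = 2*s") simp_all
  finally show ?thesis .
qed


lemma sd_even_val: "s \<ge> 1 \<Longrightarrow> even ib \<Longrightarrow> sdeg s ib = real ib / real (2*s)"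
  by (auto simp: sdeg_def elim!: evenE)
lemma sd_odd_val: "s \<ge> 1 \<Longrightarrow> odd ib \<Longrightarrow> sdeg s ib = real ib / real (2*s) - 1 - 1 / real (2*s)"
proof -
  assume s: "s \<ge> 1" and o: "odd ib"
  then obtain r where r: "ib = 2*r+1" by (auto elim!: oddE)
  have "sdeg s ib = -1 + real r / real s" using r by (simp add: sdeg_def)
  also have "\<dots> = real ib / real (2*s) - 1 - 1 / real (2*s)" using r s by (simp add: field_simps)
  finally show ?thesis .
qed

lemma rmat_entry: "ib \<le> 2*s \<Longrightarrow> ip < n \<Longrightarrow> q < n \<Longrightarrow> rmat n s a t $$ (ib*n+ip, q) = (if even ib then a t ib $$ (ip,q) else 0)"
  using blk_lt[of ib s ip n] by (simp add: rmat_def)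

lemma Qmat_entry: "ib \<le> 2*s \<Longrightarrow> ip < n \<Longrightarrow> jb \<le> 2*s \<Longrightarrow> jp < n \<Longrightarrow>
   Qmat n s a t $$ (ib*n+ip, jb*n+jp) = (if jb = 2*s then a t ib $$ (ip,jp) else if ib = jb+1 \<and> ip = jp then 1 else 0)"
  using blk_lt[of ib s ip n] blk_lt[of jb s jp n] by (simp add: Qmat_def)

lemma r_scale:
  assumes acar: "\<And>t i. i \<le> 2*s \<Longrightarrow> a t i \<in> carrier_mat n n" and s: "s \<ge> 1"
  shows "Dl n s \<mu> * rmat n s a t = rmat n s (scale s \<mu> a) t"
proof (rule mat_ext_blk[OF mult_carrier_mat[OF Dl_carrier rmat_carrier] rmat_carrier])
  fix ib ip q assume ib: "ib \<le> 2*s" and ip: "ip < n" and q: "q < n"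
  have "(Dl n s \<mu> * rmat n s a t) $$ (ib*n+ip,q) = \<mu> powr (real ib / real (2*s)) * rmat n s a t $$ (ib*n+ip,q)"
    using diag_left[OF rmat_carrier blk_lt[OF ib ip] q] ip by simp
  also have "\<dots> = rmat n s (scale s \<mu> a) t $$ (ib*n+ip,q)"
    unfolding rmat_entry[OF ib ip q] scale_def
    using smult_entry[OF acar[OF ib] ip q] sd_even_val[OF s] by simp
  finally show "(Dl n s \<mu> * rmat n s a t) $$ (ib*n+ip,q) = rmat n s (scale s \<mu> a) t $$ (ib*n+ip,q)" .
qed

lemma Q_scale:
  assumes acar: "\<And>t i. i \<le> 2*s \<Longrightarrow> a t i \<in> carrier_mat n n" and s: "s \<ge> 1" and mu: "\<mu> > 0"
  shows "Dl n s \<mu> * Qmat n s a t = (\<mu> powr (1 / real (2*s))) \<cdot>\<^sub>m (Qmat n s (scale s \<mu> a) t * Dl n s \<mu>)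
           + (1 - \<mu> powr (1 + 1 / real (2*s))) \<cdot>\<^sub>m (rmat n s (scale s \<mu> a) t * Lsel n s)"
proof (rule mat_ext_blk)
  let ?M = "(2*s+1)*n"
  let ?a' = "scale s \<mu> a"
  have c1: "Qmat n s ?a' t * Dl n s \<mu> \<in> carrier_mat ?M ?M" by (rule mult_carrier_mat[OF Qmat_carrier Dl_carrier])
  have c2: "rmat n s ?a' t * Lsel n s \<in> carrier_mat ?M ?M" by (rule mult_carrier_mat[OF rmat_carrier Lsel_carrier])
  show "Dl n s \<mu> * Qmat n s a t \<in> carrier_mat ?M ?M" by (rule mult_carrier_mat[OF Dl_carrier Qmat_carrier])
  show "(\<mu> powr (1 / real (2*s))) \<cdot>\<^sub>m (Qmat n s ?a' t * Dl n s \<mu>) + (1 - \<mu> powr (1 + 1 / real (2*s))) \<cdot>\<^sub>m (rmat n s ?a' t * Lsel n s) \<in> carrier_mat ?M ?M"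
    by (rule add_carrier_mat[OF smult_carrier_mat[OF c2]])
  fix ib ip j assume ib: "ib \<le> 2*s" and ip: "ip < n" and j: "j < ?M"
  have n0: "n > 0" using ip by simp
  define jb where "jb = j div n"
  define jp where "jp = j mod n"
  have jbs: "jb \<le> 2*s" using j unfolding jb_def by (simp add: div_less_iff_less_mult n0 less_Suc_eq_le[symmetric])
  have jp: "jp < n" unfolding jp_def using n0 by simp
  have jeq: "j = jb*n+jp" unfolding jb_def jp_def by simp
  have i: "ib*n+ip < ?M" by (rule blk_lt[OF ib ip])
  have L: "(Dl n s \<mu> * Qmat n s a t) $$ (ib*n+ip, j) = \<mu> powr (real ib / real (2*s)) * Qmat n s a t $$ (ib*n+ip, jb*n+jp)"
    using diag_left[OF Qmat_carrier i j] ip unfolding jeq by simp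
  have R1: "(Qmat n s ?a' t * Dl n s \<mu>) $$ (ib*n+ip, j) = Qmat n s ?a' t $$ (ib*n+ip, jb*n+jp) * \<mu> powr (real jb / real (2*s))"
    using diag_right[OF Qmat_carrier i j] jp unfolding jeq by simp
  have R2: "(rmat n s ?a' t * Lsel n s) $$ (ib*n+ip, j) = (if jb = 2*s then rmat n s ?a' t $$ (ib*n+ip, jp) else 0)"
    unfolding jeq by (rule Lsel_right[OF rmat_carrier i jbs jp])
  have R: "((\<mu> powr (1 / real (2*s))) \<cdot>\<^sub>m (Qmat n s ?a' t * Dl n s \<mu>) + (1 - \<mu> powr (1 + 1 / real (2*s))) \<cdot>\<^sub>m (rmat n s ?a' t * Lsel n s)) $$ (ib*n+ip, j)
     = \<mu> powr (1 / real (2*s)) * (Qmat n s ?a' t $$ (ib*n+ip, jb*n+jp) * \<mu> powr (real jb / real (2*s)))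
       + (1 - \<mu> powr (1 + 1 / real (2*s))) * (if jb = 2*s then rmat n s ?a' t $$ (ib*n+ip, jp) else 0)"
    using smult_entry[OF c1 i j] smult_entry[OF c2 i j] add_entry[OF smult_carrier_mat[OF c2] i j] R1 R2 by simp
  have a'e: "?a' t ib $$ (ip,jp) = \<mu> powr sdeg s ib * a t ib $$ (ip,jp)"
    unfolding scale_def by (rule smult_entry[OF acar[OF ib] ip jp])
  show "(Dl n s \<mu> * Qmat n s a t) $$ (ib*n+ip, j) = ((\<mu> powr (1 / real (2*s))) \<cdot>\<^sub>m (Qmat n s ?a' t * Dl n s \<mu>) + (1 - \<mu> powr (1 + 1 / real (2*s))) \<cdot>\<^sub>m (rmat n s ?a' t * Lsel n s)) $$ (ib*n+ip, j)"
  proof (cases "jb = 2*s")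
    case True
    have mu1: "\<mu> powr (real jb / real (2*s)) = \<mu>" using True s mu by simp
    have Qe: "Qmat n s a t $$ (ib*n+ip, jb*n+jp) = a t ib $$ (ip,jp)" "Qmat n s ?a' t $$ (ib*n+ip, jb*n+jp) = ?a' t ib $$ (ip,jp)"
      using Qmat_entry[OF ib ip jbs jp] True by simp_all
    have re: "rmat n s ?a' t $$ (ib*n+ip, jp) = (if even ib then ?a' t ib $$ (ip,jp) else 0)" by (rule rmat_entry[OF ib ip jp])
    show ?thesis
    proof (cases "even ib")
      case True
      have "\<mu> powr (1 / real (2*s)) * \<mu> = \<mu> powr (1 + 1 / real (2*s))"
        using mu by (simp add: powr_add)
      thus ?thesis unfolding L R Qe mu1 re a'e using True \<open>jb = 2*s\<close> sd_even_val[OF s True]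
        by (simp add: algebra_simps)
    next
      case False
      have m1: "\<mu> = \<mu> powr 1" using mu by simp
      have "\<mu> powr (1 / real (2*s)) * (\<mu> powr sdeg s ib * \<mu>) = \<mu> powr (1 / real (2*s) + (sdeg s ib + 1))"
        by (subst m1) (simp add: powr_add)
      also have "1 / real (2*s) + (sdeg s ib + 1) = real ib / real (2*s)" using sd_odd_val[OF s False] by simp
      finally have "\<mu> powr (1 / real (2*s)) * (\<mu> powr sdeg s ib * \<mu>) = \<mu> powr (real ib / real (2*s))" .
      thus ?thesis unfolding L R Qe mu1 re a'e using False \<open>jb = 2*s\<close>
        by (simp add: algebra_simps)
    qed
  next
    case False
    have Qe: "Qmat n s a t $$ (ib*n+ip, jb*n+jp) = (if ib = jb+1 \<and> ip = jp then 1 else 0)"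
      "Qmat n s ?a' t $$ (ib*n+ip, jb*n+jp) = (if ib = jb+1 \<and> ip = jp then 1 else 0)"
      using Qmat_entry[OF ib ip jbs jp] False by simp_all
    have pw: "\<mu> powr (1 / real (2*s)) * \<mu> powr (real jb / real (2*s)) = \<mu> powr (real ib / real (2*s))" if "ib = jb+1"
      using that by (simp add: powr_add[symmetric] add_divide_distrib)
    show ?thesis unfolding L R Qe using False pw by auto
  qed
qed


lemma window:
  assumes acar: "\<And>t i. i \<le> 2*s \<Longrightarrow> a t i \<in> carrier_mat n n" and s: "s \<ge> 1" and mu: "\<mu> > 0"
    and U: "U \<in> carrier_mat 1 ((2*s+1)*n)"
    and z: "\<And>j. j < l \<Longrightarrow> U * Fmat n s (scale s \<mu> a) k j = 0\<^sub>m 1 n"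
  shows "U * Dl n s \<mu> * Qprod n s a k l = (\<mu> powr (real l / real (2*s))) \<cdot>\<^sub>m (U * Qprod n s (scale s \<mu> a) k l * Dl n s \<mu>)"
  using z
proof (induction l)
  let ?M = "(2*s+1)*n"
  have UD: "U * Dl n s \<mu> \<in> carrier_mat 1 ?M" by (rule mult_carrier_mat[OF U Dl_carrier])
  case 0
  have "U * Dl n s \<mu> * Qprod n s a k 0 = U * Dl n s \<mu>" unfolding Qprod.simps by (rule right_mult_one_mat[OF UD])
  moreover have "U * Qprod n s (scale s \<mu> a) k 0 = U" unfolding Qprod.simps by (rule right_mult_one_mat[OF U])
  moreover have "(\<mu> powr (real 0 / real (2*s))) \<cdot>\<^sub>m (U * Dl n s \<mu>) = U * Dl n s \<mu>"
    by (rule eq_matI) (insert mu UD, auto)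
  ultimately show ?case by simp
next
  let ?M = "(2*s+1)*n"
  let ?a' = "scale s \<mu> a"
  have UD: "U * Dl n s \<mu> \<in> carrier_mat 1 ?M" by (rule mult_carrier_mat[OF U Dl_carrier])
  case (Suc l)
  let ?P = "Qprod n s a k l" and ?P' = "Qprod n s ?a' k l" and ?Q = "Qmat n s a (k+l)" and ?Q' = "Qmat n s ?a' (k+l)"
    and ?r' = "rmat n s ?a' (k+l)" and ?L = "Lsel n s" and ?D = "Dl n s \<mu>"
  let ?c1 = "\<mu> powr (1 / real (2*s))" and ?c2 = "1 - \<mu> powr (1 + 1 / real (2*s))" and ?cl = "\<mu> powr (real l / real (2*s))"
  have IH: "U * ?D * ?P = ?cl \<cdot>\<^sub>m (U * ?P' * ?D)" using Suc.IH Suc.prems by simp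
  have UP': "U * ?P' \<in> carrier_mat 1 ?M" by (rule mult_carrier_mat[OF U Qprod_carrier])
  have UP'D: "U * ?P' * ?D \<in> carrier_mat 1 ?M" by (rule mult_carrier_mat[OF UP' Dl_carrier])
  have Q'D: "?Q' * ?D \<in> carrier_mat ?M ?M" by (rule mult_carrier_mat[OF Qmat_carrier Dl_carrier])
  have r'L: "?r' * ?L \<in> carrier_mat ?M ?M" by (rule mult_carrier_mat[OF rmat_carrier Lsel_carrier])
  have F0: "U * ?P' * ?r' = 0\<^sub>m 1 n"
  proof -
    have "U * ?P' * ?r' = U * Fmat n s ?a' k l" unfolding Fmat_def
      by (rule assoc_mult_mat[OF U Qprod_carrier rmat_carrier])
    thus ?thesis using Suc.prems[of l] by simp
  qed
  have "U * ?D * Qprod n s a k (Suc l) = U * ?D * (?P * ?Q)" by simp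
  also have "\<dots> = (U * ?D * ?P) * ?Q" by (rule assoc_mult_mat[OF UD Qprod_carrier Qmat_carrier, symmetric])
  also have "\<dots> = (?cl \<cdot>\<^sub>m (U * ?P' * ?D)) * ?Q" unfolding IH ..
  also have "\<dots> = ?cl \<cdot>\<^sub>m ((U * ?P' * ?D) * ?Q)" by (rule mult_smult_assoc_mat[OF UP'D Qmat_carrier])
  also have "(U * ?P' * ?D) * ?Q = (U * ?P') * (?D * ?Q)" by (rule assoc_mult_mat[OF UP' Dl_carrier Qmat_carrier])
  also have "?D * ?Q = ?c1 \<cdot>\<^sub>m (?Q' * ?D) + ?c2 \<cdot>\<^sub>m (?r' * ?L)" by (rule Q_scale[OF acar s mu])
  also have "(U * ?P') * (?c1 \<cdot>\<^sub>m (?Q' * ?D) + ?c2 \<cdot>\<^sub>m (?r' * ?L)) = (U * ?P') * (?c1 \<cdot>\<^sub>m (?Q' * ?D)) + (U * ?P') * (?c2 \<cdot>\<^sub>m (?r' * ?L))"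
    by (rule mult_add_distrib_mat[OF UP' smult_carrier_mat[OF Q'D] smult_carrier_mat[OF r'L]])
  also have "(U * ?P') * (?c1 \<cdot>\<^sub>m (?Q' * ?D)) = ?c1 \<cdot>\<^sub>m ((U * ?P') * (?Q' * ?D))" by (rule mult_smult_distrib[OF UP' Q'D])
  also have "(U * ?P') * (?c2 \<cdot>\<^sub>m (?r' * ?L)) = ?c2 \<cdot>\<^sub>m ((U * ?P') * (?r' * ?L))" by (rule mult_smult_distrib[OF UP' r'L])
  also have "(U * ?P') * (?Q' * ?D) = ((U * ?P') * ?Q') * ?D" by (rule assoc_mult_mat[OF UP' Qmat_carrier Dl_carrier, symmetric])
  also have "(U * ?P') * ?Q' = U * Qprod n s ?a' k (Suc l)" unfolding Qprod.simps by (rule assoc_mult_mat[OF U Qprod_carrier Qmat_carrier])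
  also have "(U * ?P') * (?r' * ?L) = ((U * ?P') * ?r') * ?L" by (rule assoc_mult_mat[OF UP' rmat_carrier Lsel_carrier, symmetric])
  also have "((U * ?P') * ?r') * ?L = 0\<^sub>m 1 ?M" unfolding F0 by (rule left_mult_zero_mat[OF Lsel_carrier])
  finally have eq: "U * ?D * Qprod n s a k (Suc l) = ?cl \<cdot>\<^sub>m (?c1 \<cdot>\<^sub>m (U * Qprod n s ?a' k (Suc l) * ?D) + ?c2 \<cdot>\<^sub>m 0\<^sub>m 1 ?M)" .
  have X0: "U * Qprod n s ?a' k (Suc l) * ?D \<in> carrier_mat 1 ?M" by (rule mult_carrier_mat[OF mult_carrier_mat[OF U Qprod_carrier] Dl_carrier])
  have pw: "?cl * ?c1 = \<mu> powr (real (Suc l) / real (2*s))" by (simp add: powr_add[symmetric] add_divide_distrib add.commute)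
  define Xm where "Xm = U * Qprod n s ?a' k (Suc l) * ?D"
  have X: "Xm \<in> carrier_mat 1 ?M" unfolding Xm_def by (rule X0)
  have Z: "0\<^sub>m 1 ?M \<in> carrier_mat 1 ?M" by simp
  have A1: "?c1 \<cdot>\<^sub>m Xm + ?c2 \<cdot>\<^sub>m 0\<^sub>m 1 ?M \<in> carrier_mat 1 ?M" by (rule add_carrier_mat[OF smult_carrier_mat[OF Z]])
  have A2: "\<mu> powr (real (Suc l) / real (2*s)) \<cdot>\<^sub>m Xm \<in> carrier_mat 1 ?M" by (rule smult_carrier_mat[OF X])
  have "?cl \<cdot>\<^sub>m (?c1 \<cdot>\<^sub>m Xm + ?c2 \<cdot>\<^sub>m 0\<^sub>m 1 ?M) = \<mu> powr (real (Suc l) / real (2*s)) \<cdot>\<^sub>m Xm"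
  proof (rule eq_matI)
    fix i j assume i: "i < dim_row (\<mu> powr (real (Suc l) / real (2*s)) \<cdot>\<^sub>m Xm)"
      and j: "j < dim_col (\<mu> powr (real (Suc l) / real (2*s)) \<cdot>\<^sub>m Xm)"
    have i': "i < 1" and j': "j < ?M" using i j carrier_matD[OF A2] by auto
    have "(?cl \<cdot>\<^sub>m (?c1 \<cdot>\<^sub>m Xm + ?c2 \<cdot>\<^sub>m 0\<^sub>m 1 ?M)) $$ (i,j) = ?cl * ((?c1 \<cdot>\<^sub>m Xm + ?c2 \<cdot>\<^sub>m 0\<^sub>m 1 ?M) $$ (i,j))"
      by (rule smult_entry[OF A1 i' j'])
    also have "(?c1 \<cdot>\<^sub>m Xm + ?c2 \<cdot>\<^sub>m 0\<^sub>m 1 ?M) $$ (i,j) = (?c1 \<cdot>\<^sub>m Xm) $$ (i,j) + (?c2 \<cdot>\<^sub>m 0\<^sub>m 1 ?M) $$ (i,j)"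
      by (rule add_entry[OF smult_carrier_mat[OF Z] i' j'])
    also have "(?c1 \<cdot>\<^sub>m Xm) $$ (i,j) = ?c1 * Xm $$ (i,j)" by (rule smult_entry[OF X i' j'])
    also have "(?c2 \<cdot>\<^sub>m 0\<^sub>m 1 ?M) $$ (i,j) = ?c2 * 0\<^sub>m 1 ?M $$ (i,j)" by (rule smult_entry[OF Z i' j'])
    also have "(\<mu> powr (real (Suc l) / real (2*s)) \<cdot>\<^sub>m Xm) $$ (i,j) = \<mu> powr (real (Suc l) / real (2*s)) * Xm $$ (i,j)"
      by (rule smult_entry[OF X i' j'])
    ultimately show "(?cl \<cdot>\<^sub>m (?c1 \<cdot>\<^sub>m Xm + ?c2 \<cdot>\<^sub>m 0\<^sub>m 1 ?M)) $$ (i,j) = (\<mu> powr (real (Suc l) / real (2*s)) \<cdot>\<^sub>m Xm) $$ (i,j)"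
      using i' j' pw by (simp add: mult.assoc[symmetric])
  qed (insert carrier_matD[OF A1] carrier_matD[OF A2], auto)
  thus ?case unfolding eq Xm_def .
qed


lemma Fmat_dims[simp]: "dim_row (Fmat n s a t l) = (2*s+1)*n" "dim_col (Fmat n s a t l) = n"
  using carrier_matD[OF Fmat_carrier[of n s a t l]] by simp_all

lemma Nmat_dims[simp]: "dim_row (Nmat n s a t) = (2*s+1)*n" "dim_col (Nmat n s a t) = (2*s+1)*n"
  by (simp_all add: Nmat_def)

lemma transpose_mult_vec_entry:
  assumes A: "A \<in> carrier_mat m m'" and v: "v \<in> carrier_vec m" and j: "j < m'"
  shows "(transpose_mat A *\<^sub>v v) $ j = (\<Sum>i<m. A $$ (i,j) * v $ i)"
proof -
  have dA: "dim_row A = m" "dim_col A = m'" using A by auto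
  have dv: "dim_vec v = m" using v by auto
  have "(transpose_mat A *\<^sub>v v) $ j = row (transpose_mat A) j \<bullet> v" using j dA by simp
  also have "row (transpose_mat A) j = col A j" using j dA by simp
  also have "col A j \<bullet> v = (\<Sum>i\<in>{0..<m}. col A j $ i * v $ i)" unfolding scalar_prod_def dv ..
  also have "\<dots> = (\<Sum>i<m. A $$ (i,j) * v $ i)" using j dA by (auto simp: lessThan_atLeast0 intro!: sum.cong)
  finally show ?thesis .
qed

lemma Nmat_entry: "i < (2*s+1)*n \<Longrightarrow> j < (2*s+1)*n \<Longrightarrow> Nmat n s a t $$ (i,j) = Fmat n s a t (j div n) $$ (i, j mod n)"
  by (simp add: Nmat_def)

lemma row_times_N:
  assumes W: "W \<in> carrier_mat 1 ((2*s+1)*n)" and z: "\<And>l. l \<le> 2*s \<Longrightarrow> W * Fmat n s a t l = 0\<^sub>m 1 n"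
    and j: "j < (2*s+1)*n"
  shows "(W * Nmat n s a t) $$ (0,j) = 0"
proof -
  let ?M = "(2*s+1)*n"
  have n0: "n > 0" using j by (cases n) auto
  have jb: "j div n \<le> 2*s" using j by (simp add: div_less_iff_less_mult n0 less_Suc_eq_le[symmetric])
  have jp: "j mod n < n" using n0 by simp
  have "(W * Nmat n s a t) $$ (0,j) = (\<Sum>i<?M. W $$ (0,i) * Nmat n s a t $$ (i,j))"
    by (rule mult_entry_sum[OF W Nmat_carrier _ j]) simp
  also have "\<dots> = (\<Sum>i<?M. W $$ (0,i) * Fmat n s a t (j div n) $$ (i, j mod n))"
    using j by (intro sum.cong refl) (simp add: Nmat_entry)
  also have "\<dots> = (W * Fmat n s a t (j div n)) $$ (0, j mod n)"
    by (rule mult_entry_sum[OF W Fmat_carrier _ jp, symmetric]) simp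
  also have "\<dots> = 0" unfolding z[OF jb] using jp by simp
  finally show ?thesis .
qed

lemma det_scaled:
  assumes acar: "\<And>t i. i \<le> 2*s \<Longrightarrow> a t i \<in> carrier_mat n n" and s: "s \<ge> 1" and mu: "\<mu> > 0"
    and det: "det (Nmat n s a k) \<noteq> 0"
  shows "det (Nmat n s (scale s \<mu> a) k) \<noteq> 0"
proof
  let ?M = "(2*s+1)*n"
  let ?a' = "scale s \<mu> a"
  let ?N' = "Nmat n s ?a' k" and ?N = "Nmat n s a k" and ?D = "Dl n s \<mu>"
  assume d0: "det ?N' = 0"
  have tc: "transpose_mat ?N' \<in> carrier_mat ?M ?M" unfolding transpose_carrier_mat by (rule Nmat_carrier)
  have "det (transpose_mat ?N') = 0" using d0 det_transpose[OF Nmat_carrier] by simp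
  then obtain v where v: "v \<in> carrier_vec ?M" "v \<noteq> 0\<^sub>v ?M" "transpose_mat ?N' *\<^sub>v v = 0\<^sub>v ?M"
    using det_0_iff_vec_prod_zero[OF tc] by blast
  have dv: "dim_vec v = ?M" using v(1) by simp
  define U where "U = mat 1 ?M (\<lambda>(i,j). v $ j)"
  have U: "U \<in> carrier_mat 1 ?M" unfolding U_def by simp
  have UN: "(U * ?N') $$ (0,j) = 0" if j: "j < ?M" for j
  proof -
    have "(U * ?N') $$ (0,j) = (\<Sum>i<?M. U $$ (0,i) * ?N' $$ (i,j))"
      by (rule mult_entry_sum[OF U Nmat_carrier _ j]) simp
    also have "\<dots> = (\<Sum>i<?M. ?N' $$ (i,j) * v $ i)" by (intro sum.cong refl) (simp add: U_def)
    also have "\<dots> = (transpose_mat ?N' *\<^sub>v v) $ j"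
      by (rule transpose_mult_vec_entry[OF Nmat_carrier v(1) j, symmetric])
    also have "\<dots> = 0" using v(3) j by simp
    finally show ?thesis .
  qed
  have UF: "U * Fmat n s ?a' k l = 0\<^sub>m 1 n" if l: "l \<le> 2*s" for l
  proof (rule eq_matI)
    fix i q assume "i < dim_row (0\<^sub>m 1 n :: real mat)" "q < dim_col (0\<^sub>m 1 n :: real mat)"
    hence i: "i = 0" and q: "q < n" by auto
    have lq: "l*n+q < ?M" by (rule blk_lt[OF l q])
    have "(U * Fmat n s ?a' k l) $$ (0,q) = (\<Sum>i<?M. U $$ (0,i) * Fmat n s ?a' k l $$ (i,q))"
      by (rule mult_entry_sum[OF U Fmat_carrier _ q]) simp
    also have "\<dots> = (\<Sum>i<?M. U $$ (0,i) * ?N' $$ (i,l*n+q))"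
      using lq q by (intro sum.cong refl) (simp add: Nmat_entry)
    also have "\<dots> = (U * ?N') $$ (0,l*n+q)"
      by (rule mult_entry_sum[OF U Nmat_carrier _ lq, symmetric]) simp
    also have "\<dots> = 0" by (rule UN[OF lq])
    finally show "(U * Fmat n s ?a' k l) $$ (i,q) = 0\<^sub>m 1 n $$ (i,q)" using i q by simp
  qed (insert U, auto)
  define W where "W = U * ?D"
  have W: "W \<in> carrier_mat 1 ?M" unfolding W_def by (rule mult_carrier_mat[OF U Dl_carrier])
  have WF: "W * Fmat n s a k l = 0\<^sub>m 1 n" if l: "l \<le> 2*s" for l
  proof -
    let ?P = "Qprod n s a k l" and ?P' = "Qprod n s ?a' k l" and ?r = "rmat n s a (k+l)" and ?r' = "rmat n s ?a' (k+l)"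
    have zz: "\<And>j. j < l \<Longrightarrow> U * Fmat n s ?a' k j = 0\<^sub>m 1 n" using UF l by simp
    have win: "U * ?D * ?P = (\<mu> powr (real l / real (2*s))) \<cdot>\<^sub>m (U * ?P' * ?D)"
      by (rule window[OF acar s mu U zz])
    have UP': "U * ?P' \<in> carrier_mat 1 ?M" by (rule mult_carrier_mat[OF U Qprod_carrier])
    have UP'D: "U * ?P' * ?D \<in> carrier_mat 1 ?M" by (rule mult_carrier_mat[OF UP' Dl_carrier])
    have "W * Fmat n s a k l = U * ?D * (?P * ?r)" unfolding W_def Fmat_def ..
    also have "\<dots> = (U * ?D * ?P) * ?r" by (rule assoc_mult_mat[OF W[unfolded W_def] Qprod_carrier rmat_carrier, symmetric])
    also have "\<dots> = (\<mu> powr (real l / real (2*s))) \<cdot>\<^sub>m ((U * ?P' * ?D) * ?r)" unfolding win by (rule mult_smult_assoc_mat[OF UP'D rmat_carrier])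
    also have "(U * ?P' * ?D) * ?r = (U * ?P') * (?D * ?r)" by (rule assoc_mult_mat[OF UP' Dl_carrier rmat_carrier])
    also have "?D * ?r = ?r'" by (rule r_scale[OF acar s])
    also have "(U * ?P') * ?r' = U * (?P' * ?r')" by (rule assoc_mult_mat[OF U Qprod_carrier rmat_carrier])
    also have "?P' * ?r' = Fmat n s ?a' k l" unfolding Fmat_def ..
    also have "U * Fmat n s ?a' k l = 0\<^sub>m 1 n" by (rule UF[OF l])
    finally show ?thesis by simp
  qed
  define w where "w = vec ?M (\<lambda>j. W $$ (0,j))"
  have wc: "w \<in> carrier_vec ?M" unfolding w_def by simp
  have wN: "transpose_mat ?N *\<^sub>v w = 0\<^sub>v ?M"
  proof (rule eq_vecI)
    fix j assume "j < dim_vec (0\<^sub>v ?M :: real vec)"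
    hence j: "j < ?M" by simp
    have "(transpose_mat ?N *\<^sub>v w) $ j = (\<Sum>i<?M. ?N $$ (i,j) * w $ i)"
      by (rule transpose_mult_vec_entry[OF Nmat_carrier wc j])
    also have "\<dots> = (\<Sum>i<?M. W $$ (0,i) * ?N $$ (i,j))"
      by (intro sum.cong refl) (simp add: w_def)
    also have "\<dots> = (W * ?N) $$ (0,j)" by (rule mult_entry_sum[OF W Nmat_carrier _ j, symmetric]) simp
    also have "\<dots> = 0" by (rule row_times_N[OF W WF j])
    finally show "(transpose_mat ?N *\<^sub>v w) $ j = 0\<^sub>v ?M $ j" using j by simp
  qed simp
  have wnz: "w \<noteq> 0\<^sub>v ?M"
  proof
    assume w0: "w = 0\<^sub>v ?M"
    have "v = 0\<^sub>v ?M"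
    proof (rule eq_vecI)
      fix j assume "j < dim_vec (0\<^sub>v ?M :: real vec)"
      hence j: "j < ?M" by simp
      have "W $$ (0,j) = U $$ (0,j) * \<mu> powr (real (j div n) / real (2*s))"
        unfolding W_def by (rule diag_right[OF U _ j]) simp
      moreover have "W $$ (0,j) = 0" using w0 j unfolding w_def by (metis index_vec index_zero_vec(1))
      moreover have "U $$ (0,j) = v $ j" using j by (simp add: U_def)
      moreover have "\<mu> powr (real (j div n) / real (2*s)) \<noteq> 0" using mu by simp
      ultimately show "v $ j = 0\<^sub>v ?M $ j" using j by simp
    qed (simp add: dv)
    thus False using v(2) by simp
  qed
  have tcN: "transpose_mat ?N \<in> carrier_mat ?M ?M" unfolding transpose_carrier_mat by (rule Nmat_carrier)
  have "det (transpose_mat ?N) = 0" unfolding det_0_iff_vec_prod_zero[OF tcN] using wc wnz wN by blast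
  thus False using det det_transpose[OF Nmat_carrier] by simp
qed



lemma Cmat_char:
  assumes det: "det (Nmat n s a k) \<noteq> 0" and X: "X \<in> carrier_mat ((2*s+1)*n) n"
    and NX: "Nmat n s a k * X = Fmat n s a k (2*s+1)"
  shows "Cmat n s a k = X"
  unfolding Cmat_def
proof (rule the_equality)
  show "X \<in> carrier_mat ((2*s+1)*n) n \<and> Nmat n s a k * X = Fmat n s a k (2*s+1)" using X NX by simp
next
  let ?M = "(2*s+1)*n" and ?N = "Nmat n s a k"
  fix Y assume Y: "Y \<in> carrier_mat ((2*s+1)*n) n \<and> Nmat n s a k * Y = Fmat n s a k (2*s+1)"
  have Yc: "Y \<in> carrier_mat ?M n" using Y by simp
  have ad: "adj_mat ?N \<in> carrier_mat ?M ?M" "adj_mat ?N * ?N = det ?N \<cdot>\<^sub>m 1\<^sub>m ?M" using adj_mat[OF Nmat_carrier] by auto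
  have key: "det ?N \<cdot>\<^sub>m Z = adj_mat ?N * (?N * Z)" if Z: "Z \<in> carrier_mat ?M n" for Z
  proof -
    have "adj_mat ?N * (?N * Z) = (adj_mat ?N * ?N) * Z" by (rule assoc_mult_mat[OF ad(1) Nmat_carrier Z, symmetric])
    also have "\<dots> = (det ?N \<cdot>\<^sub>m 1\<^sub>m ?M) * Z" unfolding ad(2) ..
    also have "\<dots> = det ?N \<cdot>\<^sub>m (1\<^sub>m ?M * Z)" by (rule mult_smult_assoc_mat[OF one_carrier_mat Z])
    also have "1\<^sub>m ?M * Z = Z" by (rule left_mult_one_mat[OF Z])
    finally show ?thesis by simp
  qed
  have "det ?N \<cdot>\<^sub>m Y = det ?N \<cdot>\<^sub>m X" using key[OF Yc] key[OF X] Y NX by simp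
  show "Y = X"
  proof (rule eq_matI)
    fix i j assume i: "i < dim_row X" and j: "j < dim_col X"
    have i': "i < ?M" and j': "j < n" using i j X by auto
    have "(det ?N \<cdot>\<^sub>m Y) $$ (i,j) = (det ?N \<cdot>\<^sub>m X) $$ (i,j)" using \<open>det ?N \<cdot>\<^sub>m Y = det ?N \<cdot>\<^sub>m X\<close> by simp
    hence "det ?N * Y $$ (i,j) = det ?N * X $$ (i,j)" using smult_entry[OF Yc i' j'] smult_entry[OF X i' j'] by simp
    thus "Y $$ (i,j) = X $$ (i,j)" using det by simp
  qed (insert Yc X, auto)
qed

lemma Cmat_ex:
  assumes det: "det (Nmat n s a k) \<noteq> 0"
  shows "Cmat n s a k \<in> carrier_mat ((2*s+1)*n) n \<and> Nmat n s a k * Cmat n s a k = Fmat n s a k (2*s+1)"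
proof -
  let ?M = "(2*s+1)*n" and ?N = "Nmat n s a k" and ?F = "Fmat n s a k (2*s+1)"
  have ad: "adj_mat ?N \<in> carrier_mat ?M ?M" "?N * adj_mat ?N = det ?N \<cdot>\<^sub>m 1\<^sub>m ?M" using adj_mat[OF Nmat_carrier] by auto
  define X where "X = (1 / det ?N) \<cdot>\<^sub>m (adj_mat ?N * ?F)"
  have aF: "adj_mat ?N * ?F \<in> carrier_mat ?M n" by (rule mult_carrier_mat[OF ad(1) Fmat_carrier])
  have X: "X \<in> carrier_mat ?M n" unfolding X_def by (rule smult_carrier_mat[OF aF])
  have "?N * X = (1 / det ?N) \<cdot>\<^sub>m (?N * (adj_mat ?N * ?F))" unfolding X_def by (rule mult_smult_distrib[OF Nmat_carrier aF])
  also have "?N * (adj_mat ?N * ?F) = (?N * adj_mat ?N) * ?F" by (rule assoc_mult_mat[OF Nmat_carrier ad(1) Fmat_carrier, symmetric])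
  also have "\<dots> = det ?N \<cdot>\<^sub>m (1\<^sub>m ?M * ?F)" unfolding ad(2) by (rule mult_smult_assoc_mat[OF one_carrier_mat Fmat_carrier])
  also have "1\<^sub>m ?M * ?F = ?F" by (rule left_mult_one_mat[OF Fmat_carrier])
  finally have NX: "?N * X = (1 / det ?N) \<cdot>\<^sub>m (det ?N \<cdot>\<^sub>m ?F)" .
  have "(1 / det ?N) \<cdot>\<^sub>m (det ?N \<cdot>\<^sub>m ?F) = ?F"
  proof (rule eq_matI)
    fix i j assume "i < dim_row ?F" "j < dim_col ?F"
    hence i: "i < ?M" and j: "j < n" by auto
    have "((1 / det ?N) \<cdot>\<^sub>m (det ?N \<cdot>\<^sub>m ?F)) $$ (i,j) = (1 / det ?N) * (det ?N * ?F $$ (i,j))"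
      using smult_entry[OF smult_carrier_mat[OF Fmat_carrier] i j] smult_entry[OF Fmat_carrier i j] by simp
    thus "((1 / det ?N) \<cdot>\<^sub>m (det ?N \<cdot>\<^sub>m ?F)) $$ (i,j) = ?F $$ (i,j)" using det by simp
  qed auto
  with NX have NX': "?N * X = ?F" by simp
  have "Cmat n s a k = X" by (rule Cmat_char[OF det X NX'])
  thus ?thesis using X NX' by simp
qed

theorem mainTheorem10:
  fixes n s N k :: nat and a :: "nat \<Rightarrow> nat \<Rightarrow> real mat" and \<mu> :: real
  assumes "n \<ge> 1" and "s \<ge> 1" and "N \<ge> 1"
    and "\<And>k' i. i \<le> 2*s \<Longrightarrow> a k' i \<in> carrier_mat n n"
    and "\<And>k' i. a (k' + N) i = a k' i"
    and "det (Nmat n s a k) \<noteq> 0"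
    and "\<mu> > 0"
  shows "det (Nmat n s (scale s \<mu> a) k) \<noteq> 0 \<and>
         (\<forall>i \<le> 2*s. cblock n s (scale s \<mu> a) k i = (\<mu> powr sdeg s i) \<cdot>\<^sub>m cblock n s a k i)"
proof -
  let ?M = "(2*s+1)*n" and ?a' = "scale s \<mu> a"
  have acar: "\<And>t i. i \<le> 2*s \<Longrightarrow> a t i \<in> carrier_mat n n" using assms(4) by blast
  have s: "s \<ge> 1" and mu: "\<mu> > 0" and det: "det (Nmat n s a k) \<noteq> 0" using assms by auto
  have det': "det (Nmat n s ?a' k) \<noteq> 0" by (rule det_scaled[OF acar s mu det])
  define C where "C = Cmat n s a k"
  have C: "C \<in> carrier_mat ?M n" "Nmat n s a k * C = Fmat n s a k (2*s+1)" using Cmat_ex[OF det] unfolding C_def by auto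
  define e where "e j = (if j < 2*s+1 then cblock n s a k j else - 1\<^sub>m n)" for j
  have ec: "\<And>j. e j \<in> carrier_mat n n" by (simp add: e_def cblock_def)
  have se: "stack n s e = C"
  proof (rule eq_matI)
    fix i q assume "i < dim_row C" "q < dim_col C"
    hence i: "i < ?M" and q: "q < n" using C(1) by auto
    have n0: "n > 0" using q by simp
    have idn: "i div n < 2*s+1" using i by (simp add: div_less_iff_less_mult n0)
    have "stack n s e $$ (i,q) = e (i div n) $$ (i mod n, q)" using i q by (simp add: stack_def)
    also have "\<dots> = C $$ ((i div n)*n + i mod n, q)" using idn q n0 by (simp add: e_def cblock_def C_def)
    also have "(i div n)*n + i mod n = i" by simp
    finally show "stack n s e $$ (i,q) = C $$ (i,q)" .
  qed (insert C(1), auto simp: stack_def)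
  have G0: "TT n s a k e 0 $$ (r,q) = 0" if r: "r < ?M" and q: "q < n" for r q
  proof -
    have "(Fmat n s a k (2*s+1) * e (2*s+1)) $$ (r,q) = (\<Sum>p<n. Fmat n s a k (2*s+1) $$ (r,p) * e (2*s+1) $$ (p,q))"
      by (rule mult_entry_sum[OF Fmat_carrier ec r q])
    also have "\<dots> = (\<Sum>p<n. if p = q then - Fmat n s a k (2*s+1) $$ (r,q) else 0)"
      using q by (intro sum.cong refl) (auto simp: e_def)
    also have "\<dots> = - Fmat n s a k (2*s+1) $$ (r,q)" using q by simp
    finally have f: "(Fmat n s a k (2*s+1) * e (2*s+1)) $$ (r,q) = - Fmat n s a k (2*s+1) $$ (r,q)" .
    have t: "TT n s a k e 0 $$ (r,q) = (Nmat n s a k * stack n s e) $$ (r,q) + (Fmat n s a k (2*s+1) * e (2*s+1)) $$ (r,q)"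
      by (rule TT_zero[OF ec r q])
    show ?thesis unfolding t f se C(2) by simp
  qed
  have pat: "TT n s a k e l $$ (i*n+p,q) = 0"
    if "l \<le> 2*s+1" "i \<le> 2*s" "even i = even l" "p < n" "q < n" for l i p q
    by (rule pattern[OF ec det G0 that])
  define e' where "e' = (\<lambda>j. (\<mu> powr sdeg s j) \<cdot>\<^sub>m e j)"
  have e'c: "\<And>j. e' j \<in> carrier_mat n n" unfolding e'_def by (rule smult_carrier_mat[OF ec])
  have tr: "TT n s ?a' k e' 0 $$ (i*n+p,q) = 0" if "i \<le> 2*s" "p < n" "q < n" for i p q
  proof -
    have "TT n s ?a' k e' (2*s+1-(2*s+1)) $$ (i*n+p,q) = \<mu> powr (sdeg s i + sdeg s (2*s+1-(2*s+1))) * TT n s a k e (2*s+1-(2*s+1)) $$ (i*n+p,q)"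
      by (rule transport[OF ec acar pat s e'_def order_refl that])
    moreover have "TT n s a k e 0 $$ (i*n+p,q) = 0" using G0 blk_lt[OF that(1,2)] that(3) by simp
    ultimately show ?thesis by simp
  qed
  have em: "e' (2*s+1) $$ (p,q) = (if p = q then -1 else 0)" if "p < n" "q < n" for p q
  proof -
    have "sdeg s (2*s+1) = 0" using s by (simp add: sdeg_def)
    hence "e' (2*s+1) = 1 \<cdot>\<^sub>m (- 1\<^sub>m n)" unfolding e'_def e_def using mu by simp
    thus ?thesis using that by simp
  qed
  have NS': "Nmat n s ?a' k * stack n s e' = Fmat n s ?a' k (2*s+1)"
  proof (rule eq_matI)
    fix r q assume "r < dim_row (Fmat n s ?a' k (2*s+1))" "q < dim_col (Fmat n s ?a' k (2*s+1))"
    hence r: "r < ?M" and q: "q < n" by auto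
    have n0: "n > 0" using q by simp
    have rd: "r div n \<le> 2*s" using r by (simp add: div_less_iff_less_mult n0 less_Suc_eq_le[symmetric])
    have rm: "r mod n < n" using n0 by simp
    have T0: "TT n s ?a' k e' 0 $$ (r,q) = 0" using tr[OF rd rm q] unfolding div_mult_mod_eq .
    have "(Fmat n s ?a' k (2*s+1) * e' (2*s+1)) $$ (r,q) = (\<Sum>p<n. Fmat n s ?a' k (2*s+1) $$ (r,p) * e' (2*s+1) $$ (p,q))"
      by (rule mult_entry_sum[OF Fmat_carrier e'c r q])
    also have "\<dots> = (\<Sum>p<n. if p = q then - Fmat n s ?a' k (2*s+1) $$ (r,q) else 0)"
      using q em by (intro sum.cong refl) auto
    also have "\<dots> = - Fmat n s ?a' k (2*s+1) $$ (r,q)" using q by simp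
    finally have f: "(Fmat n s ?a' k (2*s+1) * e' (2*s+1)) $$ (r,q) = - Fmat n s ?a' k (2*s+1) $$ (r,q)" .
    have t: "TT n s ?a' k e' 0 $$ (r,q) = (Nmat n s ?a' k * stack n s e') $$ (r,q) + (Fmat n s ?a' k (2*s+1) * e' (2*s+1)) $$ (r,q)"
      by (rule TT_zero[OF e'c r q])
    show "(Nmat n s ?a' k * stack n s e') $$ (r,q) = Fmat n s ?a' k (2*s+1) $$ (r,q)"
      using t f T0 by simp
  qed (auto simp: stack_def)
  have C': "Cmat n s ?a' k = stack n s e'" by (rule Cmat_char[OF det' stack_carrier NS'])
  have blocks: "cblock n s ?a' k i = (\<mu> powr sdeg s i) \<cdot>\<^sub>m cblock n s a k i" if i: "i \<le> 2*s" for i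
  proof -
    have "cblock n s ?a' k i = e' i"
    proof (rule eq_matI)
      fix p q assume "p < dim_row (e' i)" "q < dim_col (e' i)"
      hence p: "p < n" and q: "q < n" using e'c[of i] by auto
      show "cblock n s ?a' k i $$ (p,q) = e' i $$ (p,q)" unfolding cblock_def C' using p q stack_entry[OF i p q] by simp
    qed (insert e'c[of i], auto simp: cblock_def)
    thus ?thesis using i unfolding e'_def e_def by simp
  qed
  show ?thesis using det' blocks by blast
qed


end
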